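(* Let $n,d\ge1$, $p>d$, and let $\Delta$, $Z$, $A=ZZ^{\top}+\Delta$, $f$, $\Lambda_{ii}$ and $d_F$ be as in the context. Let $\delta>0$ and let $S$ be a second-order critical point of $f$ satisfying the proximity condition \[ d_F(S,Z)\le\delta\sqrt{\frac dn}\,\|\Delta\|_{\mathrm{op}}. \] Then \[ \max_{1\le i\le n}\Big\|\sum_{j\ne i}\Delta_{ij}S_j\Big\|_{\mathrm{op}}\le \delta\sqrt{\frac dn}\,\|\Delta\|_{\mathrm{op}}\max_{1\le i\le n}\|\Delta_i\|_{\mathrm{op}}+\max_{1\le i\le n}\|\Delta_i^{\top}Z\|_{\mathrm{op}}, \] and if \[ n\ge\frac{3\delta^2d\|\Delta\|_{\mathrm{op}}^2}{2n}+\max_{1\le i\le n}\Big\|\sum_{j\ne i}\Delta_{ij}S_j\Big\|_{\mathrm{op}}+\|\Delta\|_{\mathrm{op}}, \] then $S$ is the unique global maximizer of both (P) and (SDP) (in the sense that $SS^{\top}$ is the unique global maximizer of (SDP), has rank $d$, and equals $RR^{\top}$ for the global maximizer $R$ of (P)). In particular this conclusion holds whenever \[ n\ge\frac{3\delta^2d\|\Delta\|_{\mathrm{op}}^2}{2n}+\delta\sqrt{\frac dn}\,\|\Delta\|_{\mathrm{op}}\max_{i}\|\Delta_i\|_{\mathrm{op}}+\max_i\|\Delta_i^{\top}Z\|_{\mathrm{op}}+\|\Delta\|_{\mathrm{op}}. \]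
   Context: $\Delta\in\mathbb{R}^{nd\times nd}$ is symmetric with $d\times d$ blocks $\Delta_{ij}$, $\Delta_{ji}=\Delta_{ij}^{\top}$, $\Delta_{ii}=0$; $\Delta_i^{\top}=[\Delta_{i1},\dots,\Delta_{in}]$ is its $i$-th block row. $Z^{\top}=[I_d,\dots,I_d]\in\mathbb{R}^{d\times nd}$, $A=ZZ^{\top}+\Delta$ (so $A_{ij}=I_d+\Delta_{ij}$). (P) is $\max_{R_i\in O(d)}\sum_{i,j}\langle R_iR_j^{\top},A_{ij}\rangle$; (SDP) is $\max\{\langle A,X\rangle: X\succeq0, X_{ii}=I_d\}$. $\mathrm{St}(d,p)=\{S_i\in\mathbb{R}^{d\times p}:S_iS_i^{\top}=I_d\}$; $S\in\mathbb{R}^{nd\times p}$ has blocks $S_i\in\mathrm{St}(d,p)$ and $f(S)=\langle A,SS^{\top}\rangle=\sum_{i,j}\langle A_{ij},S_iS_j^{\top}\rangle$. Put $\Lambda_{ii}=\frac12\sum_{j=1}^n(S_iS_j^{\top}A_{ji}+A_{ij}S_jS_i^{\top})$. The tangent space at $S_i$ is $T_{S_i}=\{Y\in\mathbb{R}^{d\times p}:S_iY^{\top}+YS_i^{\top}=0\}$. $S$ is a second-order critical point of $f$ if $\sum_jA_{ij}S_j=\Lambda_{ii}S_i$ for all $i$ (vanishing Riemannian gradient) and $\sum_i\langle\Lambda_{ii},\dot S_i\dot S_i^{\top}\rangle\ge\sum_{i,j}\langle A_{ij},\dot S_i\dot S_j^{\top}\rangle$ for all $\dot S_i\in T_{S_i}$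 (negative semidefinite Riemannian Hessian). $d_F(S,Z)=\min\{(\sum_{i}\|S_i-Q\|_F^2)^{1/2}: Q\in\mathbb{R}^{d\times p},QQ^{\top}=I_d\}$. *)

theory Defs
  imports "HOL-Analysis.Analysis"
begin

text \<open>Dimensions are types: 'n indexes the n blocks, 'd has d elements, 'p has p elements.
  Block matrices of size nd x nd are indexed by 'n \<times> 'd.\<close>

definition opnorm :: "real^'c::finite^'r::finite \<Rightarrow> real" where
  "opnorm M = onorm (\<lambda>x. M *v x)"

definition frob_inner :: "real^'c::finite^'r::finite \<Rightarrow> real^'c^'r \<Rightarrow> real" where
  "frob_inner X Y = (\<Sum>a\<in>UNIV. \<Sum>b\<in>UNIV. X $ a $ b * Y $ a $ b)"

definition frob_norm :: "real^'c::finite^'r::finite \<Rightarrow> real" where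
  "frob_norm X = sqrt (frob_inner X X)"

definition blockmat :: "('n::finite \<Rightarrow> 'm::finite \<Rightarrow> real^'c::finite^'r::finite) \<Rightarrow> real^('m \<times> 'c)^('n \<times> 'r)" where
  "blockmat B = (\<chi> r c. B (fst r) (fst c) $ snd r $ snd c)"

text \<open>The i-th block row transposed, Delta_i^T = [Delta_i1, ..., Delta_in] (d x nd).\<close>
definition block_rowT :: "('n::finite \<Rightarrow> 'n \<Rightarrow> real^'d::finite^'d) \<Rightarrow> 'n \<Rightarrow> real^('n \<times> 'd)^'d" where
  "block_rowT D i = (\<chi> a c. D i (fst c) $ a $ snd c)"

definition block_row :: "('n::finite \<Rightarrow> 'n \<Rightarrow> real^'d::finite^'d) \<Rightarrow> 'n \<Rightarrow> real^'d^('n \<times> 'd)" where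
  "block_row D i = transpose (block_rowT D i)"

text \<open>Z^T = [I_d, ..., I_d]; Z is nd x d.\<close>
definition Zmat :: "real^'d::finite^('n::finite \<times> 'd)" where
  "Zmat = (\<chi> r a. if a = snd r then 1 else 0)"

definition Amat :: "('n::finite \<Rightarrow> 'n \<Rightarrow> real^'d::finite^'d) \<Rightarrow> 'n \<Rightarrow> 'n \<Rightarrow> real^'d^'d" where
  "Amat D i j = mat 1 + D i j"

definition stiefel :: "real^'p::finite^'d::finite \<Rightarrow> bool" where
  "stiefel Y \<longleftrightarrow> Y ** transpose Y = mat 1"

definition fobj :: "('n::finite \<Rightarrow> 'n \<Rightarrow> real^'d::finite^'d) \<Rightarrow> ('n \<Rightarrow> real^'p::finite^'d) \<Rightarrow> real" where
  "fobj D S = (\<Sum>i\<in>UNIV. \<Sum>j\<in>UNIV. frob_inner (Amat D i j) (S i ** transpose (S j)))"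

definition Lambda :: "('n::finite \<Rightarrow> 'n \<Rightarrow> real^'d::finite^'d) \<Rightarrow> ('n \<Rightarrow> real^'p::finite^'d) \<Rightarrow> 'n \<Rightarrow> real^'d^'d" where
  "Lambda D S i = (1/2) *\<^sub>R (\<Sum>j\<in>UNIV. S i ** transpose (S j) ** Amat D j i
                                      + Amat D i j ** S j ** transpose (S i))"

definition tangent :: "real^'p::finite^'d::finite \<Rightarrow> (real^'p^'d) set" where
  "tangent Si = {Y. Si ** transpose Y + Y ** transpose Si = 0}"

definition second_order_critical ::
  "('n::finite \<Rightarrow> 'n \<Rightarrow> real^'d::finite^'d) \<Rightarrow> ('n \<Rightarrow> real^'p::finite^'d) \<Rightarrow> bool" where
  "second_order_critical D S \<longleftrightarrow>
     (\<forall>i. (\<Sum>j\<in>UNIV. Amat D i j ** S j) = Lambda D S i ** S i) \<and>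
     (\<forall>Sd. (\<forall>i. Sd i \<in> tangent (S i)) \<longrightarrow>
        (\<Sum>i\<in>UNIV. frob_inner (Lambda D S i) (Sd i ** transpose (Sd i)))
          \<ge> (\<Sum>i\<in>UNIV. \<Sum>j\<in>UNIV. frob_inner (Amat D i j) (Sd i ** transpose (Sd j))))"

text \<open>d_F(S,Z) = min over Q in St(d,p) (the infimum is attained by compactness).\<close>
definition dF :: "('n::finite \<Rightarrow> real^'p::finite^'d::finite) \<Rightarrow> real" where
  "dF S = Inf {sqrt (\<Sum>i\<in>UNIV. (frob_norm (S i - Q))\<^sup>2) | Q. stiefel Q}"

definition psd :: "real^'k::finite^'k \<Rightarrow> bool" where
  "psd X \<longleftrightarrow> transpose X = X \<and> (\<forall>v. 0 \<le> v \<bullet> (X *v v))"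

definition sdp_feasible :: "real^('n::finite \<times> 'd::finite)^('n \<times> 'd) \<Rightarrow> bool" where
  "sdp_feasible X \<longleftrightarrow> psd X \<and>
     (\<forall>i a b. X $ (i,a) $ (i,b) = (if a = b then 1 else 0))"

definition orthogonal_mat :: "real^'d::finite^'d \<Rightarrow> bool" where
  "orthogonal_mat R \<longleftrightarrow> R ** transpose R = mat 1"

definition Pobj :: "('n::finite \<Rightarrow> 'n \<Rightarrow> real^'d::finite^'d) \<Rightarrow> ('n \<Rightarrow> real^'d^'d) \<Rightarrow> real" where
  "Pobj D R = (\<Sum>i\<in>UNIV. \<Sum>j\<in>UNIV. frob_inner (R i ** transpose (R j)) (Amat D i j))"

end

theory Submission
  imports Defs
begin


lemma tr_mv_inner: "(transpose (M::real^'c::finite^'r::finite) *v x) \<bullet> y = x \<bullet> (M *v y)"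
  unfolding transpose_matrix_vector by (rule dot_lmul_matrix)

lemma inner_tr_mv: "y \<bullet> (transpose (M::real^'c::finite^'r::finite) *v x) = (M *v y) \<bullet> x"
proof -
  have "y \<bullet> (transpose M *v x) = (transpose M *v x) \<bullet> y" by (rule inner_commute)
  also have "\<dots> = x \<bullet> (M *v y)" by (rule tr_mv_inner)
  also have "\<dots> = (M *v y) \<bullet> x" by (rule inner_commute)
  finally show ?thesis .
qed

lemma opnorm_bound: "norm (M *v x) \<le> opnorm M * norm x"
  unfolding opnorm_def by (rule onorm) simp

lemma opnorm_le:
  fixes M :: "real^'c::finite^'r::finite"
  assumes "\<And>x. norm (M *v x) \<le> b * norm x"
  shows "opnorm M \<le> b"
  unfolding opnorm_def by (rule onorm_le) (use assms in auto)

lemma opnorm_nonneg: "0 \<le> opnorm M"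
  unfolding opnorm_def by (rule onorm_pos_le) simp

lemma opnorm_mult:
  fixes A :: "real^'n::finite^'m::finite" and B :: "real^'k::finite^'n"
  shows "opnorm (A ** B) \<le> opnorm A * opnorm B"
proof (rule opnorm_le)
  fix x
  have "norm ((A ** B) *v x) = norm (A *v (B *v x))" by (simp add: matrix_vector_mul_assoc)
  also have "\<dots> \<le> opnorm A * norm (B *v x)" by (rule opnorm_bound)
  also have "\<dots> \<le> opnorm A * (opnorm B * norm x)"
    by (rule mult_left_mono[OF opnorm_bound opnorm_nonneg])
  finally show "norm ((A ** B) *v x) \<le> opnorm A * opnorm B * norm x" by simp
qed

lemma tr_bound: "norm (transpose M *v x) \<le> opnorm M * norm x"
proof -
  let ?y = "transpose M *v x"
  have "(norm ?y)^2 = ?y \<bullet> ?y" by (simp add: power2_norm_eq_inner)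
  also have "\<dots> = x \<bullet> (M *v ?y)" by (rule tr_mv_inner)
  also have "\<dots> \<le> norm x * norm (M *v ?y)" by (rule norm_cauchy_schwarz)
  also have "\<dots> \<le> norm x * (opnorm M * norm ?y)" by (rule mult_left_mono[OF opnorm_bound]) simp
  finally have h: "(norm ?y)^2 \<le> (opnorm M * norm x) * norm ?y" by (simp add: algebra_simps)
  show ?thesis
  proof (cases "norm ?y = 0")
    case True then show ?thesis using opnorm_nonneg[of M] by simp
  next
    case False
    then have p: "norm ?y > 0" by simp
    have "norm ?y * norm ?y \<le> (opnorm M * norm x) * norm ?y" using h by (simp only: power2_eq_square)
    then show ?thesis using p by (rule mult_right_le_imp_le)
  qed
qed

lemma opnorm_transpose: "opnorm (transpose M) = opnorm M"
proof (rule antisym)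
  show "opnorm (transpose M) \<le> opnorm M" by (rule opnorm_le) (rule tr_bound)
  show "opnorm M \<le> opnorm (transpose M)"
    by (rule opnorm_le) (use tr_bound[of "transpose M"] in simp)
qed

lemma norm_sq_vec: "(norm (v::real^'n::finite))^2 = (\<Sum>i\<in>UNIV. v$i * v$i)"
  unfolding power2_norm_eq_inner inner_vec_def by simp

lemma frob_inner_self: "frob_inner M M = (\<Sum>a\<in>UNIV. (norm (M $ a))^2)"
  unfolding frob_inner_def norm_sq_vec by simp

lemma frob_inner_nonneg: "0 \<le> frob_inner M M"
  unfolding frob_inner_self by (rule sum_nonneg) simp

lemma frob_norm_sq: "(frob_norm M)^2 = frob_inner M M"
  unfolding frob_norm_def using frob_inner_nonneg by simp

lemma frob_norm_nonneg: "0 \<le> frob_norm M" unfolding frob_norm_def using frob_inner_nonneg by simp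

lemma opnorm_frob: "opnorm M \<le> frob_norm M"
proof (rule opnorm_le)
  fix x
  have "(norm (M *v x))^2 = (\<Sum>a\<in>UNIV. (M $ a \<bullet> x)^2)"
    unfolding norm_sq_vec by (simp add: matrix_mult_dot power2_eq_square)
  also have "\<dots> \<le> (\<Sum>a\<in>UNIV. (norm (M $ a))^2 * (norm x)^2)"
  proof (rule sum_mono)
    fix a
    have "\<bar>M $ a \<bullet> x\<bar> \<le> norm (M $ a) * norm x" by (rule Cauchy_Schwarz_ineq2)
    then have "\<bar>M $ a \<bullet> x\<bar>^2 \<le> (norm (M $ a) * norm x)^2" by (rule power_mono) simp
    then show "(M $ a \<bullet> x)^2 \<le> (norm (M $ a))^2 * (norm x)^2" by (simp add: power_mult_distrib)
  qed
  also have "\<dots> = (frob_norm M * norm x)^2"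
    by (simp add: power_mult_distrib frob_norm_sq frob_inner_self sum_distrib_right)
  finally have "(norm (M *v x))^2 \<le> (frob_norm M * norm x)^2" .
  then show "norm (M *v x) \<le> frob_norm M * norm x"
    by (rule power2_le_imp_le) (simp add: frob_norm_nonneg)
qed


lemma frob_transpose: "frob_inner (transpose M) (transpose M) = frob_inner M M"
  unfolding frob_inner_def transpose_def by (simp, rule sum.swap)

lemma stiefel_tr_norm:
  assumes "stiefel Q" shows "norm (transpose Q *v x) = norm x"
proof -
  have "(norm (transpose Q *v x))^2 = x \<bullet> (Q *v (transpose Q *v x))"
    unfolding power2_norm_eq_inner by (rule tr_mv_inner)
  also have "\<dots> = x \<bullet> x" using assms
    by (metis stiefel_def matrix_vector_mul_assoc matrix_vector_mul_lid)
  finally show ?thesis by (simp add: norm_eq_sqrt_inner power2_norm_eq_inner)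
qed

lemma stiefel_opnorm: assumes "stiefel Q" shows "opnorm Q \<le> 1"
proof (rule opnorm_le)
  fix x
  let ?y = "Q *v x"
  have "(norm ?y)^2 = (transpose Q *v ?y) \<bullet> x"
    unfolding power2_norm_eq_inner tr_mv_inner by (rule inner_commute)
  also have "\<dots> \<le> norm (transpose Q *v ?y) * norm x" by (rule norm_cauchy_schwarz)
  also have "\<dots> = norm ?y * norm x" using stiefel_tr_norm[OF assms] by simp
  finally have h: "(norm ?y)^2 \<le> norm ?y * norm x" .
  show "norm ?y \<le> 1 * norm x"
  proof (cases "norm ?y = 0")
    case False
    then have p: "norm ?y > 0" by simp
    have "norm ?y * norm ?y \<le> norm x * norm ?y" using h by (simp only: power2_eq_square mult.commute)
    then have "norm ?y \<le> norm x" using p by (rule mult_right_le_imp_le)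
    then show ?thesis by simp
  qed simp
qed

definition symf :: "real^'k::finite^'k \<Rightarrow> bool" where
  "symf P \<longleftrightarrow> (\<forall>a b. a \<bullet> (P *v b) = b \<bullet> (P *v a))"

lemma symf_transpose: assumes "transpose P = P" shows "symf P"
  unfolding symf_def
proof (intro allI)
  fix a b
  have "a \<bullet> (transpose P *v b) = (P *v a) \<bullet> b" by (rule inner_tr_mv)
  then show "a \<bullet> (P *v b) = b \<bullet> (P *v a)" unfolding assms by (simp only: inner_commute)
qed

lemma psd_zero_form:
  fixes P :: "real^'k::finite^'k"
  assumes sym: "symf P" and pos: "\<And>v. 0 \<le> v \<bullet> (P *v v)" and z: "v \<bullet> (P *v v) = 0"
  shows "P *v v = 0"
proof (rule ccontr)
  assume nz: "P *v v \<noteq> 0"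
  define w where "w = P *v v"
  define c where "c = w \<bullet> (P *v w)"
  have c0: "0 \<le> c" unfolding c_def by (rule pos)
  have ww: "0 < w \<bullet> w" using nz unfolding w_def by simp
  define t where "t = (w \<bullet> w) / (c + 1)"
  have t0: "0 < t" unfolding t_def using ww c0 by simp
  have symw: "v \<bullet> (P *v w) = w \<bullet> w"
    using sym unfolding symf_def w_def by blast
  have z': "v \<bullet> w = 0" using z unfolding w_def .
  have e1: "P *v (v - t *\<^sub>R w) = w - t *\<^sub>R (P *v w)"
    unfolding w_def by (simp only: matrix_vector_mult_diff_distrib matrix_vector_mult_scaleR)
  have "(v - t *\<^sub>R w) \<bullet> (P *v (v - t *\<^sub>R w)) = (v - t *\<^sub>R w) \<bullet> (w - t *\<^sub>R (P *v w))"
    by (simp only: e1)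
  also have "\<dots> = v \<bullet> w - t * (v \<bullet> (P *v w)) - t * (w \<bullet> w) + t * t * (w \<bullet> (P *v w))"
    by (simp only: inner_diff_left inner_diff_right inner_scaleR_left inner_scaleR_right inner_commute[of w v]) (simp add: algebra_simps)
  also have "\<dots> = t * (t * c - 2 * (w \<bullet> w))"
    unfolding symw z' c_def by (simp add: algebra_simps)
  also have "\<dots> < 0"
  proof -
    have "t * c < w \<bullet> w" unfolding t_def using ww c0 by (simp add: field_simps)
    then have "t * c - 2 * (w \<bullet> w) < 0" using ww by linarith
    then show ?thesis using t0 by (simp add: mult_pos_neg)
  qed
  finally show False using pos[of "v - t *\<^sub>R w"] by linarith
qed


lemma shift_mv: "(L - \<mu> *\<^sub>R mat 1) *v y = L *v y - \<mu> *\<^sub>R (y::real^'k::finite)"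
  for L :: "real^'k^'k"
  by (simp add: matrix_vector_mult_diff_rdistrib scaleR_matrix_vector_assoc[symmetric])

lemma shift_mv2: "(\<mu> *\<^sub>R mat 1 - L) *v y = \<mu> *\<^sub>R (y::real^'k::finite) - L *v y"
  for L :: "real^'k^'k"
  by (simp add: matrix_vector_mult_diff_rdistrib scaleR_matrix_vector_assoc[symmetric])

lemma form_scale: "(c *\<^sub>R y) \<bullet> (L *v (c *\<^sub>R y)) = c * c * (y \<bullet> (L *v y))"
  for L :: "real^'k::finite^'k"
  by (simp add: matrix_vector_mult_scaleR)

lemma cont_form: "continuous_on S (\<lambda>y::real^'k::finite. y \<bullet> (L *v y))"
  for L :: "real^'k^'k"
proof -
  have "continuous_on S (\<lambda>y. L *v y)"
    by (rule linear_continuous_on) simp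
  then show ?thesis by (intro continuous_intros)
qed

lemma sphere_ne: "sphere (0::real^'k::finite) 1 \<noteq> {}"
proof -
  have "axis undefined 1 \<in> sphere (0::real^'k) 1" by simp
  then show ?thesis by blast
qed

lemma form_homog:
  fixes L :: "real^'k::finite^'k"
  assumes h: "\<And>y. norm y = 1 \<Longrightarrow> \<mu> \<le> y \<bullet> (L *v y)"
  shows "\<mu> * (y \<bullet> y) \<le> y \<bullet> (L *v y)"
proof (cases "y = 0")
  case True then show ?thesis by simp
next
  case False
  let ?c = "1 / norm y"
  have n: "norm (?c *\<^sub>R y) = 1" using False by simp
  have "\<mu> \<le> ?c * ?c * (y \<bullet> (L *v y))" using h[OF n] by (simp only: form_scale)
  then have "\<mu> * (norm y * norm y) \<le> (y \<bullet> (L *v y))" using False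
    by (simp add: field_simps)
  then show ?thesis by (simp add: power2_norm_eq_inner[symmetric] power2_eq_square)
qed

lemma form_homog2:
  fixes L :: "real^'k::finite^'k"
  assumes h: "\<And>y. norm y = 1 \<Longrightarrow> y \<bullet> (L *v y) \<le> \<mu>"
  shows "y \<bullet> (L *v y) \<le> \<mu> * (y \<bullet> y)"
proof (cases "y = 0")
  case True then show ?thesis by simp
next
  case False
  let ?c = "1 / norm y"
  have n: "norm (?c *\<^sub>R y) = 1" using False by simp
  have "?c * ?c * (y \<bullet> (L *v y)) \<le> \<mu>" using h[OF n] by (simp only: form_scale)
  then have "(y \<bullet> (L *v y)) \<le> \<mu> * (norm y * norm y)" using False
    by (simp add: field_simps)
  then show ?thesis by (simp add: power2_norm_eq_inner[symmetric] power2_eq_square)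
qed

lemma min_eig:
  fixes L :: "real^'k::finite^'k"
  assumes sym: "symf L"
  obtains x \<mu> where "norm x = 1" "L *v x = \<mu> *\<^sub>R x" "\<And>y. \<mu> * (y \<bullet> y) \<le> y \<bullet> (L *v y)"
proof -
  obtain x where x: "x \<in> sphere 0 1" and xm: "\<And>y. y \<in> sphere 0 1 \<Longrightarrow> x \<bullet> (L *v x) \<le> y \<bullet> (L *v y)"
    using continuous_attains_inf[OF compact_sphere sphere_ne cont_form] by blast
  define \<mu> where "\<mu> = x \<bullet> (L *v x)"
  have nx: "norm x = 1" using x by simp
  have all: "\<And>y. \<mu> * (y \<bullet> y) \<le> y \<bullet> (L *v y)"
    by (rule form_homog) (use xm in \<open>auto simp: \<mu>_def\<close>)
  define P where "P = L - \<mu> *\<^sub>R mat 1"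
  have Pv: "\<And>y. P *v y = L *v y - \<mu> *\<^sub>R y" unfolding P_def by (rule shift_mv)
  have symP: "symf P" using sym unfolding symf_def Pv by (simp add: inner_diff_right inner_commute)
  have posP: "\<And>v. 0 \<le> v \<bullet> (P *v v)" unfolding Pv using all by (simp add: inner_diff_right)
  have zP: "x \<bullet> (P *v x) = 0" unfolding Pv using nx
    by (simp add: inner_diff_right \<mu>_def power2_norm_eq_inner[symmetric])
  have "P *v x = 0" by (rule psd_zero_form[OF symP posP zP])
  then have "L *v x = \<mu> *\<^sub>R x" unfolding Pv by simp
  then show ?thesis using that nx all by blast
qed

lemma max_eig:
  fixes L :: "real^'k::finite^'k"
  assumes sym: "symf L"
  obtains x \<mu> where "norm x = 1" "L *v x = \<mu> *\<^sub>R x" "\<And>y. y \<bullet> (L *v y) \<le> \<mu> * (y \<bullet> y)"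
proof -
  obtain x where x: "x \<in> sphere 0 1" and xm: "\<And>y. y \<in> sphere 0 1 \<Longrightarrow> y \<bullet> (L *v y) \<le> x \<bullet> (L *v x)"
    using continuous_attains_sup[OF compact_sphere sphere_ne cont_form] by blast
  define \<mu> where "\<mu> = x \<bullet> (L *v x)"
  have nx: "norm x = 1" using x by simp
  have all: "\<And>y. y \<bullet> (L *v y) \<le> \<mu> * (y \<bullet> y)"
    by (rule form_homog2) (use xm in \<open>auto simp: \<mu>_def\<close>)
  define P where "P = \<mu> *\<^sub>R mat 1 - L"
  have Pv: "\<And>y. P *v y = \<mu> *\<^sub>R y - L *v y" unfolding P_def by (rule shift_mv2)
  have symP: "symf P" using sym unfolding symf_def Pv by (simp add: inner_diff_right inner_commute)
  have posP: "\<And>v. 0 \<le> v \<bullet> (P *v v)" unfolding Pv using all by (simp add: inner_diff_right)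
  have zP: "x \<bullet> (P *v x) = 0" unfolding Pv using nx
    by (simp add: inner_diff_right \<mu>_def power2_norm_eq_inner[symmetric])
  have "P *v x = 0" by (rule psd_zero_form[OF symP posP zP])
  then have "L *v x = \<mu> *\<^sub>R x" unfolding Pv by simp
  then show ?thesis using that nx all by blast
qed


definition outer :: "real^'a::finite \<Rightarrow> real^'b::finite \<Rightarrow> real^'b^'a" where
  "outer v w = (\<chi> a b. v$a * w$b)"

lemma outer_mv: "outer v w *v y = (w \<bullet> y) *\<^sub>R v"
  unfolding outer_def by (simp add: matrix_vector_mult_def inner_vec_def vec_eq_iff sum_distrib_left mult_ac)

lemma outer_scale: "outer (c *\<^sub>R v) (c *\<^sub>R v) = (c * c) *\<^sub>R outer v v"
  unfolding outer_def by (simp add: vec_eq_iff)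

lemma frob_outer: "frob_inner C (outer v v) = v \<bullet> (C *v v)"
  unfolding frob_inner_def outer_def
  by (simp add: matrix_vector_mult_def inner_vec_def sum_distrib_left mult_ac)

lemma frob_add_right: "frob_inner C (A + B) = frob_inner C A + frob_inner C B"
  unfolding frob_inner_def by (simp add: distrib_left sum.distrib)

lemma frob_zero_right: "frob_inner C 0 = 0"
  unfolding frob_inner_def by simp

lemma frob_sum_list: "frob_inner C (sum_list (map (\<lambda>v. outer v v) vs)) = sum_list (map (\<lambda>v. v \<bullet> (C *v v)) vs)"
  by (induction vs) (simp_all add: frob_add_right frob_zero_right frob_outer)

lemma sum_list_mv: "sum_list (map (\<lambda>v. outer v v) vs) *v y = sum_list (map (\<lambda>v. (v \<bullet> y) *\<^sub>R v) vs)"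
  by (induction vs) (simp_all add: matrix_vector_mult_add_rdistrib outer_mv)

lemma kernel_subspace: "subspace {v::real^'k::finite. (Y::real^'k^'k) *v v = 0}"
  unfolding subspace_def by (simp add: matrix_vector_right_distrib matrix_vector_mult_scaleR)

lemma psd_decomp_aux:
  "\<forall>Y::real^'k::finite^'k. symf Y \<longrightarrow> (\<forall>v. 0 \<le> v \<bullet> (Y *v v)) \<longrightarrow>
     CARD('k) \<le> m + dim {v. Y *v v = 0} \<longrightarrow> (\<exists>vs. Y = sum_list (map (\<lambda>v. outer v v) vs))"
proof (induction m)
  case 0
  show ?case
  proof (intro allI impI)
    fix Y :: "real^'k^'k"
    assume "CARD('k) \<le> 0 + dim {v. Y *v v = 0}"
    then have d: "dim (UNIV::(real^'k) set) \<le> dim {v. Y *v v = 0}" by simp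
    have "{v. Y *v v = 0} = UNIV"
      by (rule subspace_dim_equal[OF kernel_subspace subspace_UNIV _ d]) simp
    then have "Y = 0" by (auto simp: matrix_eq)
    then show "\<exists>vs. Y = sum_list (map (\<lambda>v. outer v v) vs)" by (intro exI[of _ "[]"]) simp
  qed
next
  case (Suc m)
  show ?case
  proof (intro allI impI)
    fix Y :: "real^'k^'k"
    assume sym: "symf Y" and pos: "\<forall>v. 0 \<le> v \<bullet> (Y *v v)" and dimc: "CARD('k) \<le> Suc m + dim {v. Y *v v = 0}"
    show "\<exists>vs. Y = sum_list (map (\<lambda>v. outer v v) vs)"
    proof (cases "Y = 0")
      case True then show ?thesis by (intro exI[of _ "[]"]) simp
    next
      case False
      obtain x \<mu> where nx: "norm x = 1" and ev: "Y *v x = \<mu> *\<^sub>R x" and mx: "\<And>y. y \<bullet> (Y *v y) \<le> \<mu> * (y \<bullet> y)"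
        using max_eig[OF sym] by blast
      have xx: "x \<bullet> x = 1" using nx by (simp add: power2_norm_eq_inner[symmetric])
      have mu0: "0 < \<mu>"
      proof (rule ccontr)
        assume "\<not> 0 < \<mu>"
        then have "\<And>y. y \<bullet> (Y *v y) = 0"
          using mx pos by (smt (verit) inner_ge_zero mult_nonpos_nonneg)
        then have "\<And>y. Y *v y = 0" using psd_zero_form[OF sym] pos by blast
        then show False using False by (simp add: matrix_eq)
      qed
      define Y' where "Y' = Y - \<mu> *\<^sub>R outer x x"
      have Y'v: "\<And>y. Y' *v y = Y *v y - (\<mu> * (x \<bullet> y)) *\<^sub>R x"
        unfolding Y'_def by (simp add: matrix_vector_mult_diff_rdistrib scaleR_matrix_vector_assoc[symmetric] outer_mv)
      have sym': "symf Y'" using sym unfolding symf_def Y'v by (simp add: inner_diff_right inner_commute)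
      have pos': "\<forall>v. 0 \<le> v \<bullet> (Y' *v v)"
      proof
        fix y
        define c where "c = x \<bullet> y"
        define z where "z = y - c *\<^sub>R x"
        have zx: "x \<bullet> z = 0" unfolding z_def using xx by (simp add: inner_diff_right c_def)
        have yz: "y = c *\<^sub>R x + z" unfolding z_def by simp
        have "z \<bullet> (Y *v x) = 0" unfolding ev using zx by (simp add: inner_commute)
        moreover have "x \<bullet> (Y *v z) = z \<bullet> (Y *v x)" using sym unfolding symf_def by blast
        ultimately have xz: "x \<bullet> (Y *v z) = 0" by simp
        have "y \<bullet> (Y *v y) = c * c * (x \<bullet> (Y *v x)) + c * (x \<bullet> (Y *v z)) + c * (z \<bullet> (Y *v x)) + z \<bullet> (Y *v z)"
          unfolding yz by (simp add: matrix_vector_right_distrib matrix_vector_mult_scaleR inner_add_left inner_add_right algebra_simps)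
        also have "\<dots> = c * c * \<mu> + z \<bullet> (Y *v z)"
          using xz \<open>z \<bullet> (Y *v x) = 0\<close> ev xx by simp
        finally have "y \<bullet> (Y *v y) = c * c * \<mu> + z \<bullet> (Y *v z)" .
        moreover have "0 \<le> z \<bullet> (Y *v z)" using pos by blast
        ultimately show "0 \<le> y \<bullet> (Y' *v y)" unfolding Y'v c_def
          by (simp add: inner_diff_right inner_commute[of y x] algebra_simps)
      qed
      let ?K = "{v. Y *v v = 0}" and ?K' = "{v. Y' *v v = 0}"
      have xK: "x \<notin> ?K" using ev mu0 nx by auto
      have sub: "insert x ?K \<subseteq> ?K'"
      proof
        fix v assume "v \<in> insert x ?K"
        then show "v \<in> ?K'"
        proof
          assume "v = x" then show ?thesis using ev xx by (simp add: Y'v)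
        next
          assume vK: "v \<in> ?K"
          have "\<mu> * (x \<bullet> v) = (Y *v x) \<bullet> v" unfolding ev by simp
          also have "\<dots> = v \<bullet> (Y *v x)" by (simp add: inner_commute)
          also have "\<dots> = x \<bullet> (Y *v v)" using sym unfolding symf_def by metis
          also have "\<dots> = 0" using vK by simp
          finally have "x \<bullet> v = 0" using mu0 by simp
          then show ?thesis using vK by (simp add: Y'v)
        qed
      qed
      have spK: "span ?K = ?K" using kernel_subspace[of Y] by (rule span_eq_iff[THEN iffD2])
      have "x \<notin> span ?K" unfolding spK by (rule xK)
      then have "dim (insert x ?K) = dim ?K + 1" by (simp add: dim_insert)
      moreover have "dim (insert x ?K) \<le> dim ?K'" using sub by (rule dim_subset)
      ultimately have "CARD('k) \<le> m + dim ?K'" using dimc by simp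
      then obtain vs where vs: "Y' = sum_list (map (\<lambda>v. outer v v) vs)"
        using Suc.IH sym' pos' by blast
      have "Y = Y' + outer (sqrt \<mu> *\<^sub>R x) (sqrt \<mu> *\<^sub>R x)"
        unfolding outer_scale Y'_def using mu0 by (simp add: real_sqrt_mult_self)
      then have "Y = sum_list (map (\<lambda>v. outer v v) ((sqrt \<mu> *\<^sub>R x) # vs))"
        using vs by (simp add: add.commute)
      then show ?thesis by blast
    qed
  qed
qed

lemma psd_decomp:
  fixes Y :: "real^'k::finite^'k"
  assumes "symf Y" "\<And>v. 0 \<le> v \<bullet> (Y *v v)"
  obtains vs where "Y = sum_list (map (\<lambda>v. outer v v) vs)"
  using psd_decomp_aux[of "CARD('k)"] assms by auto


definition blk :: "real^('n::finite \<times> 'd::finite) \<Rightarrow> 'n \<Rightarrow> real^'d" where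
  "blk u i = (\<chi> a. u $ (i, a))"

definition mkv :: "('n::finite \<Rightarrow> real^'d::finite) \<Rightarrow> real^('n \<times> 'd)" where
  "mkv f = (\<chi> r. f (fst r) $ snd r)"

definition bcol :: "('n::finite \<Rightarrow> real^'p::finite^'d::finite) \<Rightarrow> real^'p^('n \<times> 'd)" where
  "bcol S = (\<chi> r. S (fst r) $ snd r)"

definition blk2 :: "real^('m::finite \<times> 'c::finite)^('n::finite \<times> 'r::finite) \<Rightarrow> 'n \<Rightarrow> 'm \<Rightarrow> real^'c^'r" where
  "blk2 Y i j = (\<chi> a b. Y $ (i, a) $ (j, b))"

lemma sum_pair: "(\<Sum>r\<in>UNIV. f r) = (\<Sum>i\<in>UNIV. \<Sum>a\<in>UNIV. f (i, a))"
  for f :: "('a::finite \<times> 'b::finite) \<Rightarrow> 'c::comm_monoid_add"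
  by (simp add: sum.cartesian_product UNIV_Times_UNIV[symmetric] del: UNIV_Times_UNIV)

lemma blk_mkv[simp]: "blk (mkv f) i = f i"
  unfolding blk_def mkv_def by (simp add: vec_eq_iff)

lemma mkv_blk[simp]: "mkv (blk u) = u"
  unfolding blk_def mkv_def by (simp add: vec_eq_iff)

lemma blk_eq_iff: "u = v \<longleftrightarrow> (\<forall>i. blk u i = blk v i)"
  unfolding blk_def by (auto simp: vec_eq_iff)

lemma blk_add[simp]: "blk (u + v) i = blk u i + blk v i"
  unfolding blk_def by (simp add: vec_eq_iff)
lemma blk_diff[simp]: "blk (u - v) i = blk u i - blk v i"
  unfolding blk_def by (simp add: vec_eq_iff)
lemma blk_scale[simp]: "blk (c *\<^sub>R u) i = c *\<^sub>R blk u i"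
  unfolding blk_def by (simp add: vec_eq_iff)
lemma blk_zero[simp]: "blk 0 i = 0"
  unfolding blk_def by (simp add: vec_eq_iff)

lemma inner_blk: "u \<bullet> v = (\<Sum>i\<in>UNIV. blk u i \<bullet> blk v i)"
  unfolding inner_vec_def blk_def by simp (rule sum_pair)

lemma blockmat_mv: "blk (blockmat B *v u) i = (\<Sum>j\<in>UNIV. B i j *v blk u j)"
  unfolding blk_def blockmat_def
  by (simp add: vec_eq_iff matrix_vector_mult_def sum_pair[of "\<lambda>r. _ r * u $ r"] sum_component)


lemma bcol_mv: "blk (bcol S *v x) i = S i *v x"
  unfolding blk_def bcol_def by (simp add: vec_eq_iff matrix_vector_mult_def)

lemma tr_bcol_mv: "transpose (bcol S) *v u = (\<Sum>i\<in>UNIV. transpose (S i) *v blk u i)"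
  unfolding blk_def bcol_def
  by (simp add: vec_eq_iff vector_matrix_mult_def sum_component sum_pair[of "\<lambda>r. u $ r * _ r"])

lemma bcol_mult: "bcol S ** transpose (bcol T) = blockmat (\<lambda>i j. S i ** transpose (T j))"
  by (simp add: vec_eq_iff matrix_matrix_mult_def transpose_def blockmat_def bcol_def)

lemma bcol_mult_right: "bcol S ** M = bcol (\<lambda>i. S i ** M)"
  by (simp add: vec_eq_iff matrix_matrix_mult_def bcol_def)

lemma bcol_diff: "bcol S - bcol T = bcol (\<lambda>i. S i - T i)"
  by (simp add: vec_eq_iff bcol_def)

lemma blockmat_add: "blockmat B + blockmat B' = blockmat (\<lambda>i j. B i j + B' i j)"
  by (simp add: vec_eq_iff blockmat_def)

lemma blockmat_diff: "blockmat B - blockmat B' = blockmat (\<lambda>i j. B i j - B' i j)"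
  by (simp add: vec_eq_iff blockmat_def)

lemma frob_blockmat: "frob_inner (blockmat B) (blockmat B') = (\<Sum>i\<in>UNIV. \<Sum>j\<in>UNIV. frob_inner (B i j) (B' i j))"
  unfolding frob_inner_def blockmat_def
  by (simp add: sum_pair[of "\<lambda>r. \<Sum>s\<in>UNIV. _ r s"] sum_pair[of "\<lambda>s. _ s * _ s"]) (rule sum.cong[OF refl], rule sum.swap)

lemma blockmat_blk2[simp]: "blockmat (blk2 Y) = Y"
  by (simp add: blockmat_def blk2_def vec_eq_iff)

lemma blk2_blockmat[simp]: "blk2 (blockmat B) i j = B i j"
  by (simp add: blockmat_def blk2_def vec_eq_iff)

lemma Zmat_bcol: "Zmat = bcol (\<lambda>_. mat 1)"
  by (auto simp: Zmat_def bcol_def mat_def vec_eq_iff)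

lemma A_blockmat: "Zmat ** transpose Zmat + blockmat D = blockmat (Amat D)"
  unfolding Zmat_bcol bcol_mult blockmat_add Amat_def by (simp add: transpose_mat)

lemma tr_Zmat_mv: "transpose Zmat *v u = (\<Sum>i\<in>UNIV. blk u i)"
  unfolding Zmat_bcol tr_bcol_mv by (simp add: transpose_mat)

lemma rowT_bcol: "block_rowT D i ** bcol S = (\<Sum>j\<in>UNIV. D i j ** S j)"
  by (simp add: vec_eq_iff matrix_matrix_mult_def block_rowT_def bcol_def sum_component
        sum_pair[of "\<lambda>c. _ c * _ c"])

lemma frob_bcol: "frob_inner (bcol S) (bcol S) = (\<Sum>i\<in>UNIV. frob_inner (S i) (S i))"
  unfolding frob_inner_def bcol_def by (simp add: sum_pair[of "\<lambda>r. \<Sum>s\<in>UNIV. _ r s"])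

lemma norm_sq_blk: "(norm u)^2 = (\<Sum>i\<in>UNIV. (norm (blk u i))^2)"
  by (simp add: power2_norm_eq_inner inner_blk)


lemma matrix_add_rdistrib: "(A + B) ** C = A ** C + B ** (C::real^'k::finite^'c::finite)"
  for A B :: "real^'c^'r::finite"
  by (simp add: vec_eq_iff matrix_matrix_mult_def sum.distrib distrib_right)

lemma transpose_add: "transpose (A + B) = transpose A + transpose (B::real^'c::finite^'r::finite)"
  by (simp add: vec_eq_iff transpose_def)

lemma transpose_diff: "transpose (A - B) = transpose A - transpose (B::real^'c::finite^'r::finite)"
  by (simp add: vec_eq_iff transpose_def)

lemma transpose_zero[simp]: "transpose (0::real^'c::finite^'r::finite) = 0"
  by (simp add: vec_eq_iff transpose_def)

lemma sum_mv: "(\<Sum>j\<in>A. f j) *v x = (\<Sum>j\<in>A. f j *v (x::real^'c::finite))"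
  for f :: "'i \<Rightarrow> real^'c^'r::finite"
  by (induction A rule: infinite_finite_induct) (simp_all add: matrix_vector_mult_add_rdistrib)

lemma sum_mm: "(\<Sum>j\<in>A. f j) ** M = (\<Sum>j\<in>A. f j ** (M::real^'k::finite^'c::finite))"
  for f :: "'i \<Rightarrow> real^'c^'r::finite"
  by (induction A rule: infinite_finite_induct) (simp_all add: matrix_add_rdistrib)

lemma transpose_sum: "transpose (\<Sum>j\<in>A. f j) = (\<Sum>j\<in>A. transpose (f j :: real^'c::finite^'r::finite))"
  by (induction A rule: infinite_finite_induct) (simp_all add: transpose_add)

lemma opnorm_add: "opnorm (A + B) \<le> opnorm A + opnorm (B::real^'c::finite^'r::finite)"
proof (rule opnorm_le)
  fix x
  have "norm ((A + B) *v x) \<le> norm (A *v x) + norm (B *v x)"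
    by (simp add: matrix_vector_mult_add_rdistrib norm_triangle_ineq)
  also have "\<dots> \<le> opnorm A * norm x + opnorm B * norm x"
    by (intro add_mono opnorm_bound)
  finally show "norm ((A + B) *v x) \<le> (opnorm A + opnorm B) * norm x" by (simp add: algebra_simps)
qed

lemma frob_scale_right: "frob_inner C (c *\<^sub>R M) = c * frob_inner C M"
  unfolding frob_inner_def by (simp add: sum_distrib_left mult_ac)

lemma frob_commute: "frob_inner A B = frob_inner B A"
  unfolding frob_inner_def by (simp add: mult.commute)

lemma frob_diff_left: "frob_inner (A - B) Y = frob_inner A Y - frob_inner B Y"
  unfolding frob_inner_def by (simp add: left_diff_distrib sum_subtractf)

lemma frob_neg_sq: "frob_inner (A - B) (A - B) = frob_inner (B - A) (B - A)"
  unfolding frob_inner_def by (simp add: algebra_simps)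

lemma outer_tr_left: "M ** transpose (outer a x) = outer (M *v x) a"
  unfolding outer_def
  apply (simp add: vec_eq_iff matrix_matrix_mult_def transpose_def matrix_vector_mult_def)
  apply (simp add: sum_distrib_left sum_distrib_right mult_ac)
  done

lemma outer_tr_right: "outer a x ** transpose M = outer a (M *v x)"
  unfolding outer_def
  apply (simp add: vec_eq_iff matrix_matrix_mult_def transpose_def matrix_vector_mult_def)
  apply (simp add: sum_distrib_left sum_distrib_right mult_ac)
  done

lemma outer_outer: "outer a x ** transpose (outer b x) = (x \<bullet> x) *\<^sub>R outer a b"
  unfolding outer_def by (simp add: vec_eq_iff matrix_matrix_mult_def transpose_def inner_vec_def sum_distrib_left sum_distrib_right mult_ac)

lemma outer_zero_left[simp]: "outer 0 w = 0" unfolding outer_def by (simp add: vec_eq_iff)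
lemma outer_zero_right[simp]: "outer v 0 = 0" unfolding outer_def by (simp add: vec_eq_iff)

lemma outer_mv_mv: "outer (M *v y) (M *v y) = M ** outer y y ** transpose M"
  unfolding outer_def
  by (simp add: vec_eq_iff matrix_matrix_mult_def transpose_def matrix_vector_mult_def sum_distrib_left sum_distrib_right mult_ac)

lemma sum_list_outer_map: "sum_list (map (\<lambda>v. outer v v) (map (\<lambda>y. M *v y) ys)) = M ** sum_list (map (\<lambda>y. outer y y) ys) ** transpose M"
  by (induction ys) (simp_all add: outer_mv_mv matrix_add_ldistrib matrix_add_rdistrib)

lemma frob_GGt: "frob_inner C (G ** transpose G) = frob_inner G (C ** G)"
  unfolding frob_inner_def
  apply (simp add: matrix_matrix_mult_def transpose_def sum_distrib_left mult_ac)
  apply (rule sum.cong[OF refl])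
  apply (rule sum.swap)
  done


lemma mm_zero_right[simp]: "(A::real^'c::finite^'r::finite) ** (0::real^'k::finite^'c) = 0"
  by (simp add: vec_eq_iff matrix_matrix_mult_def)
lemma mm_zero_left[simp]: "(0::real^'c::finite^'r::finite) ** (A::real^'k::finite^'c) = 0"
  by (simp add: vec_eq_iff matrix_matrix_mult_def)

lemma frob_if: "frob_inner C (if P then A else B) = (if P then frob_inner C A else frob_inner C B)"
  by simp

locale P2 =
  fixes D :: "'n::finite \<Rightarrow> 'n \<Rightarrow> real^'d::finite^'d" and S :: "'n \<Rightarrow> real^'p::finite^'d"
  assumes p_gt_d: "CARD('d) < CARD('p)"
    and D_sym: "\<And>i j. D j i = transpose (D i j)"
    and D_diag: "\<And>i. D i i = 0"
    and S_st: "\<And>i. stiefel (S i)"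
    and crit: "second_order_critical D S"
begin

definition "W = (\<Sum>j\<in>UNIV. S j)"
definition "E i = (\<Sum>j\<in>UNIV. D i j ** S j)"
definition "FQ Q = (\<Sum>i\<in>UNIV. (frob_norm (S i - Q))^2)"
definition "sig Q = real CARD('n) - FQ Q / 2"

lemma SSt: "S i ** transpose (S i) = mat 1"
  using S_st[of i] unfolding stiefel_def .

lemma first: "(\<Sum>j\<in>UNIV. Amat D i j ** S j) = Lambda D S i ** S i"
  using crit unfolding second_order_critical_def by blast

lemma AS: "(\<Sum>j\<in>UNIV. Amat D i j ** S j) = W + E i"
  unfolding Amat_def W_def E_def by (simp add: matrix_add_rdistrib sum.distrib)

lemma Lam_S: "Lambda D S i ** S i = W + E i"
  using first AS by simp

lemma Lam_eq: "Lambda D S i = (W + E i) ** transpose (S i)"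
proof -
  have "Lambda D S i = Lambda D S i ** (S i ** transpose (S i))" by (simp add: SSt)
  also have "\<dots> = (W + E i) ** transpose (S i)" by (simp add: matrix_mul_assoc Lam_S)
  finally show ?thesis .
qed

lemma Amat_tr: "transpose (Amat D i j) = Amat D j i"
  unfolding Amat_def by (simp add: transpose_add D_sym[of i j])

lemma Lam_sym: "transpose (Lambda D S i) = Lambda D S i"
proof -
  define F where "F = (\<Sum>j\<in>UNIV. Amat D i j ** S j ** transpose (S i))"
  have "F = (\<Sum>j\<in>UNIV. Amat D i j ** S j) ** transpose (S i)" unfolding F_def sum_mm ..
  also have "\<dots> = Lambda D S i ** S i ** transpose (S i)" by (simp only: first)
  also have "\<dots> = Lambda D S i" by (simp add: matrix_mul_assoc[symmetric] SSt)
  finally have F: "F = Lambda D S i" .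
  have tF: "transpose F = (\<Sum>j\<in>UNIV. S i ** transpose (S j) ** Amat D j i)"
    unfolding F_def transpose_sum
    by (simp add: matrix_transpose_mul Amat_tr matrix_mul_assoc)
  have L0: "Lambda D S i = (1/2) *\<^sub>R ((\<Sum>j\<in>UNIV. S i ** transpose (S j) ** Amat D j i) + F)"
    unfolding Lambda_def F_def by (simp only: sum.distrib)
  then have "Lambda D S i = (1/2) *\<^sub>R (transpose F + F)" unfolding tF .
  then have L: "Lambda D S i = (1/2) *\<^sub>R (transpose (Lambda D S i) + Lambda D S i)" unfolding F .
  have "transpose (Lambda D S i) = (1/2) *\<^sub>R (Lambda D S i + transpose (Lambda D S i))"
    by (subst L) (simp add: transpose_scalar transpose_add)
  also have "\<dots> = Lambda D S i" by (subst (3) L) (simp add: add.commute)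
  finally show ?thesis .
qed

lemma Lam_symf: "symf (Lambda D S i)"
  by (rule symf_transpose[OF Lam_sym])

lemma second_ord: "a \<bullet> a \<le> a \<bullet> (Lambda D S i *v a)"
proof -
  have "rank (S i) \<le> CARD('d)" using rank_bound[of "S i"] by simp
  then have "rank (S i) \<noteq> CARD('p)" using p_gt_d by simp
  then obtain x where x0: "x \<noteq> 0" and Sx: "S i *v x = 0"
    using matrix_nonfull_linear_equations_eq[of "S i"] by blast
  define Sd where "Sd = (\<lambda>j. if j = i then outer a x else (0::real^'p^'d))"
  have tan: "\<forall>j. Sd j \<in> tangent (S j)"
    unfolding tangent_def Sd_def by (simp add: outer_tr_left outer_tr_right Sx)
  have prod: "\<And>k l. Sd k ** transpose (Sd l) = (if k = i then (if l = i then (x \<bullet> x) *\<^sub>R outer a a else 0) else 0)"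
    unfolding Sd_def by (simp add: outer_outer)
  have ineq: "(\<Sum>k\<in>UNIV. frob_inner (Lambda D S k) (Sd k ** transpose (Sd k)))
      \<ge> (\<Sum>k\<in>UNIV. \<Sum>l\<in>UNIV. frob_inner (Amat D k l) (Sd k ** transpose (Sd l)))"
    using crit tan unfolding second_order_critical_def by blast
  have lhs: "(\<Sum>k\<in>UNIV. frob_inner (Lambda D S k) (Sd k ** transpose (Sd k))) = (x \<bullet> x) * (a \<bullet> (Lambda D S i *v a))"
  proof -
    have "\<And>k. frob_inner (Lambda D S k) (Sd k ** transpose (Sd k)) = (if k = i then (x \<bullet> x) * (a \<bullet> (Lambda D S i *v a)) else 0)"
      unfolding prod by (auto simp: frob_scale_right frob_outer frob_zero_right)
    then show ?thesis by simp
  qed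
  have rhs: "(\<Sum>k\<in>UNIV. \<Sum>l\<in>UNIV. frob_inner (Amat D k l) (Sd k ** transpose (Sd l))) = (x \<bullet> x) * (a \<bullet> a)"
  proof -
    have "\<And>k l. frob_inner (Amat D k l) (Sd k ** transpose (Sd l)) = (if k = i then (if l = i then (x \<bullet> x) * (a \<bullet> a) else 0) else 0)"
      unfolding prod by (auto simp: frob_scale_right frob_outer frob_zero_right Amat_def D_diag)
    moreover have "\<And>k. (\<Sum>l\<in>UNIV. (if k = i then (if l = i then (x \<bullet> x) * (a \<bullet> a) else 0) else 0)) = (if k = i then (x \<bullet> x) * (a \<bullet> a) else 0)"
      by (case_tac "k = i") simp_all
    ultimately show ?thesis by simp
  qed
  have "(x \<bullet> x) * (a \<bullet> a) \<le> (x \<bullet> x) * (a \<bullet> (Lambda D S i *v a))" using ineq lhs rhs by simp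
  moreover have "0 < x \<bullet> x" using x0 by simp
  ultimately show ?thesis by simp
qed

end


lemma frob_norm_neg: "frob_norm (A - B) = frob_norm (B - A)"
  by (simp only: frob_norm_def frob_neg_sq[of A B])

context P2 begin

lemma inner_tr_one:
  assumes Q: "stiefel Q" and Sj: "stiefel Sj" and nx: "norm x = 1"
  shows "1 - (frob_norm (Sj - Q))^2 / 2 \<le> (transpose Q *v x) \<bullet> (transpose Sj *v x)"
proof -
  let ?a = "transpose Q *v x" and ?b = "transpose Sj *v x"
  have na: "?a \<bullet> ?a = 1" using stiefel_tr_norm[OF Q, of x] nx by (simp add: power2_norm_eq_inner[symmetric])
  have nb: "?b \<bullet> ?b = 1" using stiefel_tr_norm[OF Sj, of x] nx by (simp add: power2_norm_eq_inner[symmetric])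
  have eq: "(norm (?a - ?b))^2 = 2 - 2 * (?a \<bullet> ?b)"
    unfolding power2_norm_eq_inner using na nb by (simp add: inner_diff_left inner_diff_right inner_commute)
  have eqd: "?a - ?b = transpose (Q - Sj) *v x" by (simp only: transpose_diff matrix_vector_mult_diff_rdistrib)
  have "norm (?a - ?b) \<le> opnorm (Q - Sj) * norm x" unfolding eqd by (rule tr_bound)
  also have "\<dots> \<le> frob_norm (Sj - Q)" using opnorm_frob[of "Q - Sj"] nx frob_norm_neg[of Q Sj] by simp
  finally have "(norm (?a - ?b))^2 \<le> (frob_norm (Sj - Q))^2" by (rule power_mono) simp
  then show ?thesis using eq by simp
qed

lemma lam_bound:
  assumes Q: "stiefel Q"
  shows "(sig Q - opnorm (E i)) * (y \<bullet> y) \<le> y \<bullet> (Lambda D S i *v y)"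
proof -
  obtain x \<mu> where nx: "norm x = 1" and ev: "Lambda D S i *v x = \<mu> *\<^sub>R x"
      and all: "\<And>y. \<mu> * (y \<bullet> y) \<le> y \<bullet> (Lambda D S i *v y)"
    using min_eig[OF Lam_symf] by blast
  have xx: "x \<bullet> x = 1" using nx by (simp add: power2_norm_eq_inner[symmetric])
  have mu1: "1 \<le> \<mu>" using second_ord[of x i] ev xx by simp
  have "transpose (W + E i) = transpose (S i) ** Lambda D S i"
    unfolding Lam_S[symmetric] matrix_transpose_mul Lam_sym ..
  then have "transpose (W + E i) *v x = \<mu> *\<^sub>R (transpose (S i) *v x)"
    by (simp only: matrix_vector_mul_assoc[symmetric] ev matrix_vector_mult_scaleR)
  then have n1: "norm (transpose (W + E i) *v x) = \<mu>"
    using stiefel_tr_norm[OF S_st[of i], of x] nx mu1 by simp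
  have split: "transpose (W + E i) *v x = transpose W *v x + transpose (E i) *v x"
    by (simp only: transpose_add matrix_vector_mult_add_rdistrib)
  have nE: "norm (transpose (E i) *v x) \<le> opnorm (E i)" using tr_bound[of "E i" x] nx by simp
  have nW: "sig Q \<le> norm (transpose W *v x)"
  proof -
    have WT: "transpose W *v x = (\<Sum>j\<in>UNIV. transpose (S j) *v x)"
      unfolding W_def transpose_sum sum_mv ..
    have "sig Q = (\<Sum>j\<in>UNIV. 1 - (frob_norm (S j - Q))^2 / 2)"
      unfolding sig_def FQ_def by (simp add: sum_subtractf sum_divide_distrib)
    also have "\<dots> \<le> (\<Sum>j\<in>UNIV. (transpose Q *v x) \<bullet> (transpose (S j) *v x))"
      by (rule sum_mono) (rule inner_tr_one[OF Q S_st nx])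
    also have "\<dots> = (transpose Q *v x) \<bullet> (transpose W *v x)"
      unfolding WT by (simp add: inner_sum_right)
    also have "\<dots> = x \<bullet> (Q *v (transpose W *v x))" by (rule tr_mv_inner)
    also have "\<dots> \<le> norm x * norm (Q *v (transpose W *v x))" by (rule norm_cauchy_schwarz)
    also have "\<dots> \<le> norm (transpose W *v x)"
    proof -
      have "norm (Q *v (transpose W *v x)) \<le> opnorm Q * norm (transpose W *v x)" by (rule opnorm_bound)
      also have "\<dots> \<le> 1 * norm (transpose W *v x)" by (rule mult_right_mono[OF stiefel_opnorm[OF Q]]) simp
      finally show ?thesis using nx by simp
    qed
    finally show ?thesis .
  qed
  have "transpose W *v x = transpose (W + E i) *v x - transpose (E i) *v x" unfolding split by simp
  then have "norm (transpose W *v x) \<le> norm (transpose (W + E i) *v x) + norm (transpose (E i) *v x)"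
    by (simp only: norm_triangle_ineq4)
  then have key: "sig Q - opnorm (E i) \<le> \<mu>" using n1 nE nW by linarith
  show ?thesis
  proof -
    have "(sig Q - opnorm (E i)) * (y \<bullet> y) \<le> \<mu> * (y \<bullet> y)"
      by (rule mult_right_mono[OF key]) simp
    also have "\<dots> \<le> y \<bullet> (Lambda D S i *v y)" by (rule all)
    finally show ?thesis .
  qed
qed

end


lemma transpose_blockmat: "transpose (blockmat B) = blockmat (\<lambda>i j. transpose (B j i))"
  by (simp add: vec_eq_iff blockmat_def transpose_def)

lemma range_mv_subspace: "subspace (range (\<lambda>x. (A::real^'c::finite^'r::finite) *v x))"
proof -
  have "subspace ((\<lambda>x. A *v x) ` UNIV)"
    by (rule linear_subspace_image) (simp_all add: subspace_UNIV)
  then show ?thesis by simp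
qed

lemma mv_sum: "(A::real^'c::finite^'r::finite) *v (\<Sum>i\<in>I. f i) = (\<Sum>i\<in>I. A *v f i)"
  by (induction I rule: infinite_finite_induct) (simp_all add: matrix_vector_right_distrib)

context P2 begin

definition "Cm = blockmat (\<lambda>i j. (if i = j then Lambda D S i else 0) - Amat D i j)"

lemma if_mv: "(if P then A else 0) *v v = (if P then A *v v else 0)" by simp

lemma C_blk: "blk (Cm *v u) i = Lambda D S i *v blk u i - (\<Sum>j\<in>UNIV. Amat D i j *v blk u j)"
  unfolding Cm_def blockmat_mv
  by (simp add: matrix_vector_mult_diff_rdistrib sum_subtractf if_mv)

lemma C_S: "Cm *v (bcol S *v x) = 0"
  unfolding blk_eq_iff
proof
  fix i
  have "blk (Cm *v (bcol S *v x)) i = (Lambda D S i ** S i) *v x - (\<Sum>j\<in>UNIV. Amat D i j ** S j) *v x"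
    unfolding C_blk bcol_mv sum_mv by (simp add: matrix_vector_mul_assoc)
  also have "\<dots> = 0" unfolding first by simp
  finally show "blk (Cm *v (bcol S *v x)) i = blk 0 i" by simp
qed

lemma C_bcolS: "Cm ** bcol S = 0"
  unfolding matrix_eq by (simp add: matrix_vector_mul_assoc[symmetric] C_S)

lemma C_sym: "transpose Cm = Cm"
proof -
  have "(\<lambda>i j. transpose ((if j = i then Lambda D S j else 0) - Amat D j i)) =
        (\<lambda>i j. (if i = j then Lambda D S i else 0) - Amat D i j)"
    by (auto simp: fun_eq_iff transpose_diff Lam_sym Amat_tr)
  then show ?thesis unfolding Cm_def transpose_blockmat by simp
qed

lemma C_symf: "symf Cm" by (rule symf_transpose[OF C_sym])

lemma C_form: "u \<bullet> (Cm *v u) = (\<Sum>i\<in>UNIV. blk u i \<bullet> (Lambda D S i *v blk u i))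
     - (norm (\<Sum>i\<in>UNIV. blk u i))^2 - u \<bullet> (blockmat D *v u)"
proof -
  have A: "\<And>i. (\<Sum>j\<in>UNIV. Amat D i j *v blk u j) = (\<Sum>j\<in>UNIV. blk u j) + (\<Sum>j\<in>UNIV. D i j *v blk u j)"
    unfolding Amat_def by (simp add: matrix_vector_mult_add_rdistrib sum.distrib)
  have "u \<bullet> (Cm *v u) = (\<Sum>i\<in>UNIV. blk u i \<bullet> (Lambda D S i *v blk u i))
      - (\<Sum>i\<in>UNIV. blk u i \<bullet> (\<Sum>j\<in>UNIV. blk u j)) - (\<Sum>i\<in>UNIV. blk u i \<bullet> (\<Sum>j\<in>UNIV. D i j *v blk u j))"
    unfolding inner_blk[of u] C_blk A by (simp add: inner_diff_right inner_add_right sum_subtractf sum.distrib)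
  also have "(\<Sum>i\<in>UNIV. blk u i \<bullet> (\<Sum>j\<in>UNIV. blk u j)) = (norm (\<Sum>i\<in>UNIV. blk u i))^2"
    by (simp add: power2_norm_eq_inner inner_sum_left)
  also have "(\<Sum>i\<in>UNIV. blk u i \<bullet> (\<Sum>j\<in>UNIV. D i j *v blk u j)) = u \<bullet> (blockmat D *v u)"
    unfolding inner_blk[of u "blockmat D *v u"] blockmat_mv ..
  finally show ?thesis .
qed

lemma D_form: "u \<bullet> (blockmat D *v u) \<le> opnorm (blockmat D) * (u \<bullet> u)"
proof -
  have "u \<bullet> (blockmat D *v u) \<le> norm u * norm (blockmat D *v u)" by (rule norm_cauchy_schwarz)
  also have "\<dots> \<le> norm u * (opnorm (blockmat D) * norm u)" by (rule mult_left_mono[OF opnorm_bound]) simp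
  finally show ?thesis by (simp add: power2_norm_eq_inner[symmetric] power2_eq_square mult_ac)
qed

lemma C_lower:
  assumes Q: "stiefel Q" and Mx: "\<And>i. opnorm (E i) \<le> Mx"
  shows "(sig Q - Mx - opnorm (blockmat D)) * (u \<bullet> u) - (norm (\<Sum>i\<in>UNIV. blk u i))^2 \<le> u \<bullet> (Cm *v u)"
proof -
  have "(sig Q - Mx) * (u \<bullet> u) = (\<Sum>i\<in>UNIV. (sig Q - Mx) * (blk u i \<bullet> blk u i))"
    unfolding inner_blk[of u u] by (simp add: sum_distrib_left)
  also have "\<dots> \<le> (\<Sum>i\<in>UNIV. blk u i \<bullet> (Lambda D S i *v blk u i))"
  proof (rule sum_mono)
    fix i
    have "(sig Q - Mx) * (blk u i \<bullet> blk u i) \<le> (sig Q - opnorm (E i)) * (blk u i \<bullet> blk u i)"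
      by (rule mult_right_mono) (use Mx[of i] in simp_all)
    also have "\<dots> \<le> blk u i \<bullet> (Lambda D S i *v blk u i)" by (rule lam_bound[OF Q])
    finally show "(sig Q - Mx) * (blk u i \<bullet> blk u i) \<le> blk u i \<bullet> (Lambda D S i *v blk u i)" .
  qed
  finally have 1: "(sig Q - Mx) * (u \<bullet> u) \<le> (\<Sum>i\<in>UNIV. blk u i \<bullet> (Lambda D S i *v blk u i))" .
  show ?thesis using 1 D_form[of u] unfolding C_form by (simp add: algebra_simps)
qed

lemma perp_bound:
  assumes Q: "stiefel Q" and w: "transpose (bcol S) *v w = 0"
  shows "(norm (\<Sum>i\<in>UNIV. blk w i))^2 \<le> FQ Q * (w \<bullet> w)"
proof -
  define N where "N = bcol (\<lambda>i. Q - S i)"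
  have "norm (\<Sum>i\<in>UNIV. blk w i) = norm (transpose Q *v (\<Sum>i\<in>UNIV. blk w i))"
    using stiefel_tr_norm[OF Q] by simp
  also have "transpose Q *v (\<Sum>i\<in>UNIV. blk w i) = transpose N *v w"
  proof -
    have "transpose N *v w = (\<Sum>i\<in>UNIV. transpose Q *v blk w i) - transpose (bcol S) *v w"
      unfolding N_def tr_bcol_mv by (simp add: transpose_diff matrix_vector_mult_diff_rdistrib sum_subtractf)
    also have "\<dots> = transpose Q *v (\<Sum>i\<in>UNIV. blk w i)"
      using w by (simp add: mv_sum)
    finally show ?thesis by simp
  qed
  also have "norm (transpose N *v w) \<le> opnorm N * norm w" by (rule tr_bound)
  also have "\<dots> \<le> frob_norm N * norm w" by (rule mult_right_mono[OF opnorm_frob]) simp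
  finally have 1: "norm (\<Sum>i\<in>UNIV. blk w i) \<le> frob_norm N * norm w" .
  have "(frob_norm N)^2 = FQ Q"
    unfolding frob_norm_sq N_def frob_bcol FQ_def
    by (simp add: frob_norm_sq[symmetric] frob_norm_neg[of Q])
  then have "(norm (\<Sum>i\<in>UNIV. blk w i))^2 \<le> FQ Q * (norm w)^2"
    using power_mono[OF 1 norm_ge_zero, of 2] by (simp add: power_mult_distrib)
  then show ?thesis by (simp add: power2_norm_eq_inner)
qed

lemma dF_eq: "dF S = Inf {sqrt (FQ Q) | Q. stiefel Q}"
  unfolding dF_def FQ_def ..

lemma dF_set_ne: "{sqrt (FQ Q) | Q. stiefel Q} \<noteq> {}"
  using S_st[of undefined] by blast

lemma dF_ge: assumes "\<And>Q. stiefel Q \<Longrightarrow> t \<le> sqrt (FQ Q)" shows "t \<le> dF S"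
  unfolding dF_eq by (rule cInf_greatest[OF dF_set_ne]) (use assms in blast)

lemma FQ_nonneg: "0 \<le> FQ Q" unfolding FQ_def by (simp add: sum_nonneg)

lemma dF_nonneg: "0 \<le> dF S" by (rule dF_ge) (simp add: FQ_nonneg)

lemma dF_ge_sq: assumes "\<And>Q. stiefel Q \<Longrightarrow> t \<le> FQ Q" shows "t \<le> (dF S)^2"
proof (cases "t \<le> 0")
  case True then show ?thesis by (smt (verit) zero_le_power2)
next
  case False
  have "sqrt t \<le> dF S" by (rule dF_ge) (use assms in simp)
  moreover have t0: "0 \<le> t" using False by simp
  ultimately have "(sqrt t)^2 \<le> (dF S)^2" by (intro power_mono) simp_all
  then show ?thesis using t0 by simp
qed

end


locale P2h = P2 D S for D :: "'n::finite \<Rightarrow> 'n \<Rightarrow> real^'d::finite^'d" and S :: "'n \<Rightarrow> real^'p::finite^'d" +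
  fixes Mx dFb :: real
  assumes Mx_ge: "\<And>i. opnorm (\<Sum>j\<in>UNIV. D i j ** S j) \<le> Mx"
    and H: "3/2 * dFb^2 + Mx + opnorm (blockmat D) \<le> real CARD('n)"
    and Hd: "dF S \<le> dFb"
    and H0: "dFb = 0 \<Longrightarrow> Mx + opnorm (blockmat D) < real CARD('n)"
begin

lemma Mx: "opnorm (E i) \<le> Mx" unfolding E_def by (rule Mx_ge)

lemma dF_sq_le: "(dF S)^2 \<le> dFb^2"
  by (rule power_mono[OF Hd dF_nonneg])

lemma C_psd: "0 \<le> u \<bullet> (Cm *v u)"
proof -
  let ?g = "real CARD('n) - Mx - opnorm (blockmat D)"
  let ?R = "range (\<lambda>x. bcol S *v x)"
  obtain y z where y: "y \<in> span ?R" and zo: "\<And>w. w \<in> span ?R \<Longrightarrow> orthogonal z w" and u: "u = y + z"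
    using orthogonal_subspace_decomp_exists[of ?R u] by blast
  have spr: "span ?R = ?R" using range_mv_subspace by (rule span_eq_iff[THEN iffD2])
  obtain x where yx: "y = bcol S *v x" using y unfolding spr by blast
  have zS: "transpose (bcol S) *v z = 0"
  proof -
    let ?v = "transpose (bcol S) *v z"
    have "bcol S *v ?v \<in> span ?R" unfolding spr by blast
    then have "z \<bullet> (bcol S *v ?v) = 0" using zo orthogonal_def by blast
    then have "?v \<bullet> ?v = 0" by (simp only: tr_mv_inner)
    then show ?thesis by simp
  qed
  have Cy: "Cm *v y = 0" unfolding yx by (rule C_S)
  have "y \<bullet> (Cm *v z) = z \<bullet> (Cm *v y)" using C_symf unfolding symf_def by blast
  then have yCz: "y \<bullet> (Cm *v z) = 0" using Cy by simp
  have uCu: "u \<bullet> (Cm *v u) = z \<bullet> (Cm *v z)"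
    unfolding u using Cy yCz by (simp add: matrix_vector_right_distrib inner_add_left)
  have low: "\<And>Q. stiefel Q \<Longrightarrow> (?g - 3/2 * FQ Q) * (z \<bullet> z) \<le> z \<bullet> (Cm *v z)"
  proof -
    fix Q :: "real^'p^'d" assume Q: "stiefel Q"
    have 1: "(sig Q - Mx - opnorm (blockmat D)) * (z \<bullet> z) - (norm (\<Sum>i\<in>UNIV. blk z i))^2 \<le> z \<bullet> (Cm *v z)"
      by (rule C_lower[OF Q Mx])
    have 2: "(norm (\<Sum>i\<in>UNIV. blk z i))^2 \<le> FQ Q * (z \<bullet> z)" by (rule perp_bound[OF Q zS])
    show "(?g - 3/2 * FQ Q) * (z \<bullet> z) \<le> z \<bullet> (Cm *v z)"
      using 1 2 unfolding sig_def by (simp add: algebra_simps)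
  qed
  show ?thesis
  proof (rule ccontr)
    assume neg: "\<not> 0 \<le> u \<bullet> (Cm *v u)"
    then have zC: "z \<bullet> (Cm *v z) < 0" using uCu by simp
    have zz: "0 < z \<bullet> z"
    proof (rule ccontr)
      assume "\<not> 0 < z \<bullet> z"
      then have "z = 0" by simp
      then show False using zC by simp
    qed
    define t where "t = (?g - (z \<bullet> (Cm *v z)) / (z \<bullet> z)) * (2/3)"
    have "\<And>Q. stiefel Q \<Longrightarrow> t \<le> FQ Q"
    proof -
      fix Q :: "real^'p^'d" assume Q: "stiefel Q"
      have "?g - 3/2 * FQ Q \<le> (z \<bullet> (Cm *v z)) / (z \<bullet> z)"
        using low[OF Q] zz by (simp add: pos_le_divide_eq)
      then show "t \<le> FQ Q" unfolding t_def by simp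
    qed
    then have "t \<le> (dF S)^2" by (rule dF_ge_sq)
    also have "\<dots> \<le> dFb^2" by (rule dF_sq_le)
    finally have "t \<le> dFb^2" .
    moreover have "(z \<bullet> (Cm *v z)) / (z \<bullet> z) < 0" using zC zz by (simp add: divide_neg_pos)
    ultimately show False using H unfolding t_def by simp
  qed
qed

lemma C_pd:
  assumes Cu: "Cm *v u = 0" and Zu: "transpose Zmat *v u = 0"
  shows "u = 0"
proof -
  let ?g = "real CARD('n) - Mx - opnorm (blockmat D)"
  have sum0: "(\<Sum>i\<in>UNIV. blk u i) = 0" using Zu unfolding tr_Zmat_mv .
  have "\<exists>Q. stiefel Q \<and> FQ Q < 2 * ?g"
  proof (rule ccontr)
    assume "\<not> (\<exists>Q. stiefel Q \<and> FQ Q < 2 * ?g)"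
    then have "\<And>Q. stiefel Q \<Longrightarrow> 2 * ?g \<le> FQ Q" by (simp add: not_less)
    then have "2 * ?g \<le> (dF S)^2" by (rule dF_ge_sq)
    then have a: "2 * ?g \<le> dFb^2" using dF_sq_le by simp
    then have a': "2 * real CARD('n) - 2 * Mx - 2 * opnorm (blockmat D) \<le> dFb^2" by (simp add: algebra_simps)
    have "dFb^2 \<le> 0" using a' H by linarith
    then have "dFb^2 = 0" using zero_le_power2[of dFb] by linarith
    then have "dFb = 0" by simp
    then show False using H0 a by simp
  qed
  then obtain Q where Q: "stiefel Q" and FQ: "FQ Q < 2 * ?g" by blast
  have "(sig Q - Mx - opnorm (blockmat D)) * (u \<bullet> u) - (norm (\<Sum>i\<in>UNIV. blk u i))^2 \<le> u \<bullet> (Cm *v u)"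
    by (rule C_lower[OF Q Mx])
  then have le: "(sig Q - Mx - opnorm (blockmat D)) * (u \<bullet> u) \<le> 0" using Cu sum0 by simp
  have pos: "0 < sig Q - Mx - opnorm (blockmat D)" using FQ unfolding sig_def by simp
  have "u \<bullet> u \<le> 0" using le pos by (simp add: mult_le_0_iff)
  then have "u \<bullet> u = 0" using inner_ge_zero[of u] by linarith
  then show ?thesis by simp
qed

end


lemma psd_GGt: "psd (G ** transpose (G::real^'c::finite^'r::finite))"
  unfolding psd_def
proof (intro conjI allI)
  show "transpose (G ** transpose G) = G ** transpose G" by (simp add: matrix_transpose_mul)
  fix v
  have "v \<bullet> ((G ** transpose G) *v v) = v \<bullet> (G *v (transpose G *v v))" by (simp only: matrix_vector_mul_assoc)
  also have "\<dots> = (transpose G *v v) \<bullet> (transpose G *v v)" by (simp only: tr_mv_inner)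
  finally show "0 \<le> v \<bullet> ((G ** transpose G) *v v)" by simp
qed

lemma feasible_bcol:
  assumes "\<And>i. R i ** transpose (R i) = mat 1"
  shows "sdp_feasible (blockmat (\<lambda>i j. R i ** transpose (R j)))"
  unfolding sdp_feasible_def
proof (intro conjI allI)
  show "psd (blockmat (\<lambda>i j. R i ** transpose (R j)))" unfolding bcol_mult[symmetric] by (rule psd_GGt)
  fix i a b
  show "blockmat (\<lambda>i j. R i ** transpose (R j)) $ (i, a) $ (i, b) = (if a = b then 1 else 0)"
    unfolding blockmat_def using assms[of i] by (simp add: mat_def)
qed

lemma feasible_blk2: assumes "sdp_feasible Y" shows "blk2 Y i i = mat 1"
  using assms unfolding sdp_feasible_def blk2_def by (simp add: vec_eq_iff mat_def)

lemma frob_zero_left: "frob_inner 0 Y = 0" unfolding frob_inner_def by simp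

lemma tr_bcol_bcol: "transpose (bcol R) ** bcol R = (\<Sum>i\<in>UNIV. transpose (R i) ** R i)"
  by (simp add: vec_eq_iff matrix_matrix_mult_def transpose_def bcol_def sum_component
        sum_pair[of "\<lambda>r. _ r * _ r"])

context P2h begin

definition "i0 = (undefined :: 'n)"
definition "R i = S i ** transpose (S i0)"
definition "Rb = bcol R"
definition "K = {u. Cm *v u = 0}"
definition "X = blockmat (\<lambda>i j. S i ** transpose (S j))"
definition "Am = Zmat ** transpose Zmat + blockmat D"

lemma Rb_eq: "Rb = bcol S ** transpose (S i0)"
  unfolding Rb_def R_def bcol_mult_right ..

lemma R_i0: "R i0 = mat 1" unfolding R_def by (rule SSt)

lemma K_sub: "subspace K" unfolding K_def by (rule kernel_subspace)

lemma range_Rb_K: "range (\<lambda>y. Rb *v y) \<subseteq> K"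
proof
  fix v assume "v \<in> range (\<lambda>y. Rb *v y)"
  then obtain y where "v = Rb *v y" by blast
  then have "v = bcol S *v (transpose (S i0) *v y)" unfolding Rb_eq by (simp only: matrix_vector_mul_assoc)
  then show "v \<in> K" unfolding K_def by (simp add: C_S)
qed

lemma dim_K: "dim K \<le> CARD('d)"
proof -
  have spK: "span K = K" using K_sub by (rule span_eq_iff[THEN iffD2])
  have inj: "inj_on (\<lambda>u. transpose Zmat *v u) (span K)"
    unfolding spK
  proof (rule inj_onI)
    fix u v assume u: "u \<in> K" and v: "v \<in> K" and eq: "transpose Zmat *v u = transpose Zmat *v v"
    have "Cm *v (u - v) = 0" using u v unfolding K_def by (simp add: matrix_vector_mult_diff_distrib)
    moreover have "transpose Zmat *v (u - v) = 0" using eq by (simp only: matrix_vector_mult_diff_distrib) simp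
    ultimately have "u - v = 0" by (rule C_pd)
    then show "u = v" by simp
  qed
  have "dim ((\<lambda>u. transpose Zmat *v u) ` K) = dim K"
    by (rule dim_image_eq[OF matrix_vector_mul_linear inj])
  moreover have "dim ((\<lambda>u. transpose Zmat *v u) ` K) \<le> CARD('d)" by (rule dim_subset_UNIV_cart)
  ultimately show ?thesis by simp
qed

lemma blk_Rb_i0: "blk (Rb *v y) i0 = y"
  unfolding Rb_def bcol_mv R_i0 by simp

lemma dim_Rb: "dim (range (\<lambda>y. Rb *v y)) = CARD('d)"
proof -
  have inj: "inj_on (\<lambda>y. Rb *v y) (span UNIV)"
    by (rule inj_onI) (metis blk_Rb_i0)
  have "dim ((\<lambda>y. Rb *v y) ` UNIV) = dim (UNIV :: (real^'d) set)"
    by (rule dim_image_eq[OF _ inj]) simp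
  then show ?thesis by simp
qed

lemma K_eq: "range (\<lambda>y. Rb *v y) = K"
  by (rule subspace_dim_equal[OF range_mv_subspace K_sub range_Rb_K]) (simp add: dim_Rb dim_K)

lemma K_Rb: assumes "v \<in> K" shows "v = Rb *v (blk v i0)"
proof -
  from assms obtain y where "v = Rb *v y" unfolding K_eq[symmetric] by blast
  then show ?thesis using blk_Rb_i0 by simp
qed

lemma S_R: "S i = R i ** S i0"
  unfolding matrix_eq
proof
  fix x
  have "bcol S *v x \<in> K" unfolding K_def by (simp add: C_S)
  then have e: "bcol S *v x = Rb *v (blk (bcol S *v x) i0)" by (rule K_Rb)
  have "S i *v x = blk (bcol S *v x) i" by (simp add: bcol_mv)
  also have "\<dots> = blk (Rb *v (S i0 *v x)) i" by (subst e) (simp add: bcol_mv)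
  also have "\<dots> = (R i ** S i0) *v x" unfolding Rb_def bcol_mv by (simp add: matrix_vector_mul_assoc)
  finally show "S i *v x = (R i ** S i0) *v x" .
qed

lemma SS_RR: "S i ** transpose (S j) = R i ** transpose (R j)"
proof -
  have "S i ** transpose (S j) = R i ** (S i0 ** transpose (S i0)) ** transpose (R j)"
    by (subst (1 2) S_R) (simp add: matrix_transpose_mul matrix_mul_assoc)
  then show ?thesis by (simp add: SSt)
qed

lemma R_orth: "R i ** transpose (R i) = mat 1"
  using SS_RR[of i i] SSt[of i] by simp

lemma R_orth2: "transpose (R i) ** R i = mat 1"
  using R_orth matrix_left_right_inverse by blast

lemma X_S: "X = bcol S ** transpose (bcol S)" unfolding X_def bcol_mult ..
lemma X_R: "X = Rb ** transpose Rb" unfolding X_def Rb_def bcol_mult SS_RR ..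

lemma X_feasible: "sdp_feasible X" unfolding X_def by (rule feasible_bcol[OF SSt])

lemma Am_eq: "Am = blockmat (Amat D)" unfolding Am_def by (rule A_blockmat)

definition "Tr = (\<Sum>i\<in>UNIV. frob_inner (Lambda D S i) (mat 1))"

lemma obj_Y: assumes Y: "sdp_feasible Y" shows "frob_inner Am Y = Tr - frob_inner Cm Y"
proof -
  have Cm_d: "Cm = blockmat (\<lambda>i j. if i = j then Lambda D S i else 0) - Am"
    unfolding Cm_def Am_eq blockmat_diff ..
  have "frob_inner (blockmat (\<lambda>i j. if i = j then Lambda D S i else 0)) Y
      = frob_inner (blockmat (\<lambda>i j. if i = j then Lambda D S i else 0)) (blockmat (blk2 Y))" by simp
  also have "\<dots> = (\<Sum>i\<in>UNIV. \<Sum>j\<in>UNIV. frob_inner (if i = j then Lambda D S i else 0) (blk2 Y i j))"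
    by (rule frob_blockmat)
  also have "\<dots> = (\<Sum>i\<in>UNIV. frob_inner (Lambda D S i) (blk2 Y i i))"
  proof (rule sum.cong[OF refl])
    fix i
    have "\<And>j. frob_inner (if i = j then Lambda D S i else 0) (blk2 Y i j) = (if i = j then frob_inner (Lambda D S i) (blk2 Y i i) else 0)"
      by (simp add: frob_zero_left)
    then show "(\<Sum>j\<in>UNIV. frob_inner (if i = j then Lambda D S i else 0) (blk2 Y i j)) = frob_inner (Lambda D S i) (blk2 Y i i)"
      by simp
  qed
  also have "\<dots> = Tr" unfolding Tr_def using feasible_blk2[OF Y] by simp
  finally have "frob_inner (blockmat (\<lambda>i j. if i = j then Lambda D S i else 0)) Y = Tr" .
  then show ?thesis unfolding Cm_d frob_diff_left by simp
qed

lemma C_X: "frob_inner Cm X = 0"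
  unfolding X_S frob_GGt C_bcolS by (simp add: frob_zero_right)

lemma obj_X: "frob_inner Am X = Tr"
  using obj_Y[OF X_feasible] C_X by simp

lemma C_Y_pos: assumes Y: "sdp_feasible Y" and ne: "Y \<noteq> X" shows "0 < frob_inner Cm Y"
proof -
  have psdY: "psd Y" using Y unfolding sdp_feasible_def by blast
  have symY: "symf Y" using psdY unfolding psd_def by (intro symf_transpose) blast
  have posY: "\<And>v. 0 \<le> v \<bullet> (Y *v v)" using psdY unfolding psd_def by blast
  obtain vs where vs: "Y = sum_list (map (\<lambda>v. outer v v) vs)" using psd_decomp[OF symY posY] by blast
  have fr: "frob_inner Cm Y = sum_list (map (\<lambda>v. v \<bullet> (Cm *v v)) vs)" unfolding vs frob_sum_list ..
  have nn: "\<And>x. x \<in> set (map (\<lambda>v. v \<bullet> (Cm *v v)) vs) \<Longrightarrow> 0 \<le> x" using C_psd by auto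
  have ge: "0 \<le> frob_inner Cm Y" unfolding fr by (rule sum_list_nonneg[OF nn])
  show ?thesis
  proof (rule ccontr)
    assume "\<not> 0 < frob_inner Cm Y"
    then have "frob_inner Cm Y = 0" using ge by simp
    then have all0: "\<forall>x\<in>set (map (\<lambda>v. v \<bullet> (Cm *v v)) vs). x = 0"
      unfolding fr using sum_list_nonneg_eq_0_iff[OF nn] by blast
    have inK: "\<And>v. v \<in> set vs \<Longrightarrow> v \<in> K"
    proof -
      fix v assume "v \<in> set vs"
      then have "v \<bullet> (Cm *v v) = 0" using all0 by auto
      then have "Cm *v v = 0" by (rule psd_zero_form[OF C_symf C_psd])
      then show "v \<in> K" unfolding K_def by simp
    qed
    define ys where "ys = map (\<lambda>v. blk v i0) vs"
    have vs_eq: "vs = map (\<lambda>y. Rb *v y) ys"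
      unfolding ys_def map_map o_def using K_Rb[OF inK] by (simp add: map_idI[symmetric])
    define G where "G = sum_list (map (\<lambda>y. outer y y) ys)"
    have YG: "Y = Rb ** G ** transpose Rb"
      unfolding vs G_def by (subst vs_eq) (rule sum_list_outer_map)
    have RG: "Rb ** G = bcol (\<lambda>i. R i ** G)" unfolding Rb_def by (rule bcol_mult_right)
    have YG2: "Y = blockmat (\<lambda>i j. R i ** G ** transpose (R j))"
      unfolding YG RG unfolding Rb_def bcol_mult ..
    have "blk2 Y i0 i0 = mat 1" by (rule feasible_blk2[OF Y])
    then have "G = mat 1" unfolding YG2 blk2_blockmat R_i0 by simp
    then have "Y = X" unfolding YG X_R by simp
    then show False using ne by simp
  qed
qed

lemma X_unique: assumes "sdp_feasible Y" "Y \<noteq> X" shows "frob_inner Am Y < frob_inner Am X"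
  using obj_Y[OF assms(1)] obj_X C_Y_pos[OF assms] by simp

lemma rank_X: "rank X = CARD('d)"
proof (rule antisym)
  have "rank X \<le> rank Rb" unfolding X_R by (rule rank_mul_le_left)
  also have "\<dots> \<le> CARD('d)" using rank_bound[of Rb] by simp
  finally show "rank X \<le> CARD('d)" .
  have RtR: "transpose Rb ** Rb = real CARD('n) *\<^sub>R mat 1"
    unfolding Rb_def tr_bcol_bcol R_orth2 by (simp add: sum_constant_scaleR del: sum_constant)
  have "transpose Rb ** X ** Rb = (transpose Rb ** Rb) ** (transpose Rb ** Rb)"
    unfolding X_R by (simp add: matrix_mul_assoc)
  also have "\<dots> = (real CARD('n) * real CARD('n)) *\<^sub>R mat 1"
    unfolding RtR by (simp add: matrix_scalar_ac scalar_matrix_assoc)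
  finally have e: "transpose Rb ** X ** Rb = (real CARD('n) * real CARD('n)) *\<^sub>R mat 1" .
  have "inj ((*v) ((real CARD('n) * real CARD('n)) *\<^sub>R (mat 1 :: real^'d^'d)))"
    by (rule injI) (simp add: scaleR_matrix_vector_assoc[symmetric])
  then have "rank ((real CARD('n) * real CARD('n)) *\<^sub>R (mat 1 :: real^'d^'d)) = CARD('d)"
    by (simp add: full_rank_injective)
  then have "CARD('d) = rank (transpose Rb ** X ** Rb)" unfolding e by simp
  also have "\<dots> \<le> rank (transpose Rb ** X)" by (rule rank_mul_le_left)
  also have "\<dots> \<le> rank X" by (rule rank_mul_le_right)
  finally show "CARD('d) \<le> rank X" .
qed

lemma Pobj_eq: "Pobj D R' = frob_inner Am (blockmat (\<lambda>i j. R' i ** transpose (R' j)))"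
  unfolding Pobj_def Am_eq frob_blockmat by (simp add: frob_commute)

end


context P2h begin

lemma concl:
  "let X = blockmat (\<lambda>i j. S i ** transpose (S j));
       A = Zmat ** transpose Zmat + blockmat D
   in sdp_feasible X
    \<and> (\<forall>Y. sdp_feasible Y \<and> Y \<noteq> X \<longrightarrow> frob_inner A Y < frob_inner A X)
    \<and> rank X = CARD('d)
    \<and> (\<exists>R. (\<forall>i. orthogonal_mat (R i))
         \<and> (\<forall>R'. (\<forall>i. orthogonal_mat (R' i)) \<longrightarrow> Pobj D R' \<le> Pobj D R)
         \<and> (\<forall>R'. (\<forall>i. orthogonal_mat (R' i)) \<and> Pobj D R' = Pobj D R \<longrightarrow>
               blockmat (\<lambda>i j. R' i ** transpose (R' j)) = X)
         \<and> X = blockmat (\<lambda>i j. R i ** transpose (R j)))"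
proof -
  have XR: "X = blockmat (\<lambda>i j. R i ** transpose (R j))" unfolding X_def SS_RR ..
  have PR: "Pobj D R = frob_inner Am X" unfolding Pobj_eq XR[symmetric] ..
  have main: "\<And>R'. (\<forall>i. orthogonal_mat (R' i)) \<Longrightarrow>
      (Pobj D R' \<le> Pobj D R) \<and> (Pobj D R' = Pobj D R \<longrightarrow> blockmat (\<lambda>i j. R' i ** transpose (R' j)) = X)"
  proof -
    fix R' :: "'n \<Rightarrow> real^'d^'d"
    assume o: "\<forall>i. orthogonal_mat (R' i)"
    let ?Y = "blockmat (\<lambda>i j. R' i ** transpose (R' j))"
    have fY: "sdp_feasible ?Y" by (rule feasible_bcol) (use o in \<open>simp add: orthogonal_mat_def\<close>)
    have PY: "Pobj D R' = frob_inner Am ?Y" by (rule Pobj_eq)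
    show "(Pobj D R' \<le> Pobj D R) \<and> (Pobj D R' = Pobj D R \<longrightarrow> ?Y = X)"
    proof (cases "?Y = X")
      case True then show ?thesis unfolding PY PR by simp
    next
      case False
      then have "frob_inner Am ?Y < frob_inner Am X" by (rule X_unique[OF fY])
      then show ?thesis unfolding PY PR by simp
    qed
  qed
  have oR: "\<forall>i. orthogonal_mat (R i)" unfolding orthogonal_mat_def using R_orth by blast
  show ?thesis
    unfolding Let_def X_def[symmetric] Am_def[symmetric]
    using X_feasible X_unique rank_X oR main XR by blast
qed

end

lemma dF_ge_gen:
  assumes st: "stiefel (S i0)" and h: "\<And>Q. stiefel Q \<Longrightarrow> t \<le> sqrt (\<Sum>i\<in>UNIV. (frob_norm (S i - Q))^2)"
  shows "t \<le> dF S"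
  unfolding dF_def
proof (rule cInf_greatest)
  show "{sqrt (\<Sum>i\<in>UNIV. (frob_norm (S i - Q))\<^sup>2) |Q. stiefel Q} \<noteq> {}" using st by blast
qed (use h in blast)

lemma MB_single:
  fixes D :: "'n::finite \<Rightarrow> 'n \<Rightarrow> real^'d::finite^'d" and S :: "'n \<Rightarrow> real^'p::finite^'d"
  assumes D_diag: "\<And>i. D i i = 0" and st: "\<And>i. stiefel (S i)" and prox: "dF S \<le> dFb" and dFb0: "0 \<le> dFb"
  shows "opnorm (\<Sum>j\<in>UNIV - {i}. D i j ** S j) \<le> opnorm (block_row D i) * dFb + opnorm (block_rowT D i ** Zmat)"
proof -
  let ?E = "\<Sum>j\<in>UNIV - {i}. D i j ** S j"
  let ?a = "opnorm (block_rowT D i ** Zmat)" and ?b = "opnorm (block_row D i)"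
  have "(\<Sum>j\<in>UNIV. D i j ** S j) = D i i ** S i + ?E" by (rule sum.remove) simp_all
  then have E: "?E = block_rowT D i ** bcol S" unfolding rowT_bcol by (simp add: D_diag)
  have b: "?b = opnorm (block_rowT D i)" unfolding block_row_def opnorm_transpose ..
  have bound: "\<And>Q. stiefel Q \<Longrightarrow> opnorm ?E \<le> ?a + ?b * sqrt (\<Sum>j\<in>UNIV. (frob_norm (S j - Q))^2)"
  proof -
    fix Q :: "real^'p^'d" assume Q: "stiefel Q"
    define N where "N = bcol (\<lambda>j. S j - Q)"
    have ZQ: "Zmat ** Q = bcol (\<lambda>_. Q)" unfolding Zmat_bcol bcol_mult_right by simp
    have "bcol S = bcol (\<lambda>_. Q) + N" unfolding N_def bcol_diff[symmetric] by simp
    then have "?E = (block_rowT D i ** Zmat) ** Q + block_rowT D i ** N"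
      unfolding E ZQ[symmetric] by (simp add: matrix_add_ldistrib matrix_mul_assoc)
    then have "opnorm ?E \<le> opnorm ((block_rowT D i ** Zmat) ** Q) + opnorm (block_rowT D i ** N)"
      by (simp add: opnorm_add)
    also have "\<dots> \<le> ?a * opnorm Q + opnorm (block_rowT D i) * opnorm N"
      by (intro add_mono opnorm_mult)
    also have "\<dots> \<le> ?a * 1 + ?b * frob_norm N"
      unfolding b by (intro add_mono mult_left_mono stiefel_opnorm[OF Q] opnorm_frob opnorm_nonneg)
    also have "frob_norm N = sqrt (\<Sum>j\<in>UNIV. (frob_norm (S j - Q))^2)"
    proof -
      have "frob_inner N N = (\<Sum>j\<in>UNIV. (frob_norm (S j - Q))^2)"
        unfolding N_def frob_bcol frob_norm_sq ..
      then show ?thesis by (simp add: frob_norm_def)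
    qed
    finally show "opnorm ?E \<le> ?a + ?b * sqrt (\<Sum>j\<in>UNIV. (frob_norm (S j - Q))^2)" by simp
  qed
  show ?thesis
  proof (cases "?b = 0")
    case True
    then show ?thesis using bound[OF st[of i]] by simp
  next
    case False
    then have bpos: "0 < ?b" using opnorm_nonneg[of "block_row D i"] by simp
    have "(opnorm ?E - ?a) / ?b \<le> dF S"
    proof (rule dF_ge_gen[of S i, OF st[of i]])
      fix Q :: "real^'p^'d" assume "stiefel Q"
      then have "opnorm ?E - ?a \<le> ?b * sqrt (\<Sum>j\<in>UNIV. (frob_norm (S j - Q))^2)"
        using bound by fastforce
      then show "(opnorm ?E - ?a) / ?b \<le> sqrt (\<Sum>j\<in>UNIV. (frob_norm (S j - Q))^2)"
        using bpos by (simp add: divide_le_eq mult.commute)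
    qed
    then have "(opnorm ?E - ?a) / ?b \<le> dFb" using prox by simp
    then show ?thesis using bpos by (simp add: divide_le_eq mult.commute)
  qed
qed


lemma opnorm_zero: "opnorm (0::real^'c::finite^'r::finite) = 0"
proof -
  have "(\<lambda>x. (0::real^'c^'r) *v x) = (\<lambda>x. 0)" by (simp add: fun_eq_iff)
  then show ?thesis unfolding opnorm_def by (simp only: onorm_zero)
qed

lemma blockmat_zero_D:
  fixes D :: "'n::finite \<Rightarrow> 'n \<Rightarrow> real^'d::finite^'d"
  assumes "opnorm (blockmat D) = 0" shows "D i j = 0"
proof -
  have "\<forall>x. blockmat D *v x = 0"
    using assms unfolding opnorm_def by (subst (asm) onorm_eq_0) simp_all
  then have "blockmat D = 0" by (simp add: matrix_eq)
  then have "blk2 (blockmat D) i j = blk2 0 i j" by simp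
  then show ?thesis by (simp add: blk2_def blockmat_def vec_eq_iff)
qed

theorem proposition2:
  fixes D :: "'n::finite \<Rightarrow> 'n \<Rightarrow> real^'d::finite^'d"
    and S :: "'n \<Rightarrow> real^'p::finite^'d"
    and \<delta> :: real
  assumes p_gt_d: "CARD('p) > CARD('d)"
    and D_sym: "\<And>i j. D j i = transpose (D i j)"
    and D_diag: "\<And>i. D i i = 0"
    and S_stiefel: "\<And>i. stiefel (S i)"
    and delta_pos: "\<delta> > 0"
    and crit: "second_order_critical D S"
    and prox: "dF S \<le> \<delta> * sqrt (real CARD('d) / real CARD('n)) * opnorm (blockmat D)"
  defines "M \<equiv> Max (range (\<lambda>i. opnorm (\<Sum>j\<in>UNIV - {i}. D i j ** S j)))"
    and "B \<equiv> \<delta> * sqrt (real CARD('d) / real CARD('n)) * opnorm (blockmat D)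
               * Max (range (\<lambda>i. opnorm (block_row D i)))
             + Max (range (\<lambda>i. opnorm (block_rowT D i ** Zmat)))"
    and "conclusion \<equiv>
           (let X = blockmat (\<lambda>i j. S i ** transpose (S j));
                A = Zmat ** transpose Zmat + blockmat D
            in sdp_feasible X
             \<and> (\<forall>Y. sdp_feasible Y \<and> Y \<noteq> X \<longrightarrow> frob_inner A Y < frob_inner A X)
             \<and> rank X = CARD('d)
             \<and> (\<exists>R. (\<forall>i. orthogonal_mat (R i))
                  \<and> (\<forall>R'. (\<forall>i. orthogonal_mat (R' i)) \<longrightarrow> Pobj D R' \<le> Pobj D R)
                  \<and> (\<forall>R'. (\<forall>i. orthogonal_mat (R' i)) \<and> Pobj D R' = Pobj D R \<longrightarrow>
                        blockmat (\<lambda>i j. R' i ** transpose (R' j)) = X)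
                  \<and> X = blockmat (\<lambda>i j. R i ** transpose (R j))))"
  shows "M \<le> B
     \<and> (real CARD('n) \<ge> 3 * \<delta>\<^sup>2 * real CARD('d) * (opnorm (blockmat D))\<^sup>2 / (2 * real CARD('n))
             + M + opnorm (blockmat D) \<longrightarrow> conclusion)
     \<and> (real CARD('n) \<ge> 3 * \<delta>\<^sup>2 * real CARD('d) * (opnorm (blockmat D))\<^sup>2 / (2 * real CARD('n))
             + B + opnorm (blockmat D) \<longrightarrow> conclusion)"
proof -
  define nD where "nD = opnorm (blockmat D)"
  define dFb where "dFb = \<delta> * sqrt (real CARD('d) / real CARD('n)) * nD"
  have nD0: "0 \<le> nD" unfolding nD_def by (rule opnorm_nonneg)
  have dFb0: "0 \<le> dFb" unfolding dFb_def using delta_pos nD0 by simp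
  have prox': "dF S \<le> dFb" using prox unfolding dFb_def nD_def .
  have fin: "finite (range f)" for f :: "'n \<Rightarrow> real" by simp
  have MBi: "\<And>i. opnorm (\<Sum>j\<in>UNIV - {i}. D i j ** S j) \<le> opnorm (block_row D i) * dFb + opnorm (block_rowT D i ** Zmat)"
    by (rule MB_single[OF D_diag S_stiefel prox' dFb0])
  have Mle: "M \<le> B"
  proof -
    have "\<forall>i. opnorm (\<Sum>j\<in>UNIV - {i}. D i j ** S j) \<le> B"
    proof
      fix i
      have b: "opnorm (block_row D i) \<le> Max (range (\<lambda>i. opnorm (block_row D i)))" by (rule Max_ge) simp_all
      have a: "opnorm (block_rowT D i ** Zmat) \<le> Max (range (\<lambda>i. opnorm (block_rowT D i ** Zmat)))" by (rule Max_ge) simp_all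
      have m: "opnorm (block_row D i) * dFb \<le> Max (range (\<lambda>i. opnorm (block_row D i))) * dFb"
        by (rule mult_right_mono[OF b dFb0])
      have "B = Max (range (\<lambda>i. opnorm (block_row D i))) * dFb + Max (range (\<lambda>i. opnorm (block_rowT D i ** Zmat)))"
        unfolding B_def dFb_def nD_def by (simp add: mult_ac)
      then show "opnorm (\<Sum>j\<in>UNIV - {i}. D i j ** S j) \<le> B"
        using MBi[of i] a m by linarith
    qed
    then show ?thesis unfolding M_def by (simp add: Max_le_iff)
  qed
  have Esum: "\<And>i. (\<Sum>j\<in>UNIV. D i j ** S j) = (\<Sum>j\<in>UNIV - {i}. D i j ** S j)"
  proof -
    fix i
    have "(\<Sum>j\<in>UNIV. D i j ** S j) = D i i ** S i + (\<Sum>j\<in>UNIV - {i}. D i j ** S j)" by (rule sum.remove) simp_all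
    then show "(\<Sum>j\<in>UNIV. D i j ** S j) = (\<Sum>j\<in>UNIV - {i}. D i j ** S j)" by (simp add: D_diag)
  qed
  have Mge: "\<And>i. opnorm (\<Sum>j\<in>UNIV. D i j ** S j) \<le> M"
    unfolding Esum M_def by (rule Max_ge) simp_all
  have n0: "0 < real CARD('n)" by simp
  have d0: "0 < real CARD('d)" by simp
  have sqeq: "3 * \<delta>\<^sup>2 * real CARD('d) * (opnorm (blockmat D))\<^sup>2 / (2 * real CARD('n)) = 3/2 * dFb^2"
  proof -
    have "dFb^2 = \<delta>^2 * (real CARD('d) / real CARD('n)) * nD^2"
      unfolding dFb_def using n0 d0 by (simp add: power_mult_distrib)
    then show ?thesis unfolding nD_def using n0 by (simp add: field_simps)
  qed
  have P2ax: "P2 D S"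
    by (rule P2.intro) (fact p_gt_d, fact D_sym, fact D_diag, fact S_stiefel, fact crit)
  interpret P2 D S by (rule P2ax)
  have cM: "real CARD('n) \<ge> 3 * \<delta>\<^sup>2 * real CARD('d) * (opnorm (blockmat D))\<^sup>2 / (2 * real CARD('n))
             + M + opnorm (blockmat D) \<Longrightarrow> conclusion"
  proof -
    assume c: "real CARD('n) \<ge> 3 * \<delta>\<^sup>2 * real CARD('d) * (opnorm (blockmat D))\<^sup>2 / (2 * real CARD('n))
             + M + opnorm (blockmat D)"
    have H0: "dFb = 0 \<Longrightarrow> M + opnorm (blockmat D) < real CARD('n)"
    proof -
      assume "dFb = 0"
      then have "nD = 0" unfolding dFb_def using delta_pos n0 d0 by simp
      then have D0: "\<And>i j. D i j = 0" unfolding nD_def by (rule blockmat_zero_D)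
      have "M = 0" unfolding M_def D0 by (simp add: opnorm_zero)
      then show ?thesis using \<open>nD = 0\<close> n0 unfolding nD_def by simp
    qed
    have Hc: "3/2 * dFb^2 + M + opnorm (blockmat D) \<le> real CARD('n)" using c unfolding sqeq .
    have ax: "P2h_axioms D S M dFb"
      by (rule P2h_axioms.intro) (fact Mge, fact Hc, fact prox', fact H0)
    interpret P2h D S M dFb by (rule P2h.intro[OF P2ax ax])
    show conclusion unfolding conclusion_def by (rule concl)
  qed
  show ?thesis
  proof (intro conjI impI)
    show "M \<le> B" by (rule Mle)
  next
    assume "real CARD('n) \<ge> 3 * \<delta>\<^sup>2 * real CARD('d) * (opnorm (blockmat D))\<^sup>2 / (2 * real CARD('n))
             + M + opnorm (blockmat D)"
    then show conclusion by (rule cM)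
  next
    assume "real CARD('n) \<ge> 3 * \<delta>\<^sup>2 * real CARD('d) * (opnorm (blockmat D))\<^sup>2 / (2 * real CARD('n))
             + B + opnorm (blockmat D)"
    then show conclusion using Mle by (intro cM) simp
  qed
qed


end
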